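(* Let $\Sigma,\Delta,\Gamma\in\mathcal{G}_n$ be pairwise generalized cospectral. Suppose $Q\in\mathcal{Q}(\Sigma)$ has level $\ell$ and $Q_1\in\mathcal{Q}(\Sigma)$ has level $\ell_1$, with $Q^{\rm T}S(\Sigma)Q=S(\Delta)$, $Q_1^{\rm T}S(\Sigma)Q_1=S(\Gamma)$ and $\ell_1\mid\ell$. Let $Q_2=Q_1^{\rm T}Q$. Then $Q_2^{\rm T}S(\Gamma)Q_2=S(\Delta)$, and the level of $Q_2$ is $\ell/\ell_1$.
   Context: An oriented graph on vertices $v_1,\dots,v_n$ is a simple graph with each edge directed; its skew-adjacency matrix $S=(s_{ij})$ has $s_{ij}=1$ if $(v_i,v_j)$ is an arc, $-1$ if $(v_j,v_i)$ is an arc, $0$ otherwise. Two oriented graphs are generalized cospectral if their skew-adjacency matrices $S$ have the same spectrum and the matrices $J-I-S$ have the same spectrum. With $e$ the all-one vector, $W(\Sigma)=[e,Se,\dots,S^{n-1}e]$, $S=S(\Sigma)$. $\mathcal{G}_n$ is the set of $n$-vertex oriented graphs with $2^{-\lfloor n/2\rfloor}\det W(\Sigma)$ an odd square-free integer. A rational orthogonal matrix $Q$ is regular if $Qe=e$; its level is the least positive integer $k$ with $kQ$ integral. $\mathcal{Q}(\Sigma)$ is the set of regular rational orthogonal $Q$ with $Q^{\rm T}S(\Sigma)Q=S(\Delta)$ for some oriented graph $\Delta$ generalized cospectral with $\Sigma$. *)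

theory Defs
  imports "Jordan_Normal_Form.Char_Poly" "Jordan_Normal_Form.Determinant"
    "HOL-Computational_Algebra.Squarefree"
begin

text \<open>An oriented graph on vertices 0,...,n-1 is given by its arc relation
  arc i j (an arc from v_i to v_j): irreflexive, at most one direction per pair.
  Only the restriction to {0..<n} matters.\<close>
definition oriented_graph :: "nat \<Rightarrow> (nat \<Rightarrow> nat \<Rightarrow> bool) \<Rightarrow> bool" where
  "oriented_graph n arc \<longleftrightarrow>
     (\<forall>i<n. \<not> arc i i) \<and> (\<forall>i<n. \<forall>j<n. \<not> (arc i j \<and> arc j i))"

definition skew_adj :: "nat \<Rightarrow> (nat \<Rightarrow> nat \<Rightarrow> bool) \<Rightarrow> rat mat" where
  "skew_adj n arc = mat n n (\<lambda>(i,j). if arc i j then 1 else if arc j i then -1 else 0)"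

definition ones_vec :: "nat \<Rightarrow> rat vec" where
  "ones_vec n = vec n (\<lambda>_. 1)"

definition ones_mat :: "nat \<Rightarrow> rat mat" where
  "ones_mat n = mat n n (\<lambda>_. 1)"

definition walk_mat :: "nat \<Rightarrow> (nat \<Rightarrow> nat \<Rightarrow> bool) \<Rightarrow> rat mat" where
  "walk_mat n arc = mat_of_cols n (map (\<lambda>k. (skew_adj n arc ^\<^sub>m k) *\<^sub>v ones_vec n) [0..<n])"

text \<open>Same spectrum = same characteristic polynomial (eigenvalues with multiplicity).\<close>
definition gen_cospectral :: "nat \<Rightarrow> (nat \<Rightarrow> nat \<Rightarrow> bool) \<Rightarrow> (nat \<Rightarrow> nat \<Rightarrow> bool) \<Rightarrow> bool" where
  "gen_cospectral n A B \<longleftrightarrow>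
     char_poly (skew_adj n A) = char_poly (skew_adj n B) \<and>
     char_poly (ones_mat n - 1\<^sub>m n - skew_adj n A) = char_poly (ones_mat n - 1\<^sub>m n - skew_adj n B)"

definition in_G :: "nat \<Rightarrow> (nat \<Rightarrow> nat \<Rightarrow> bool) \<Rightarrow> bool" where
  "in_G n arc \<longleftrightarrow> oriented_graph n arc \<and>
     (\<exists>m::int. det (walk_mat n arc) = 2 ^ (n div 2) * of_int m \<and> odd m \<and> squarefree m)"

definition regular_rat_orth :: "nat \<Rightarrow> rat mat \<Rightarrow> bool" where
  "regular_rat_orth n Q \<longleftrightarrow> Q \<in> carrier_mat n n \<and> transpose_mat Q * Q = 1\<^sub>m n
     \<and> Q *\<^sub>v ones_vec n = ones_vec n"

definition integral_mat :: "rat mat \<Rightarrow> bool" where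
  "integral_mat M \<longleftrightarrow> (\<forall>i<dim_row M. \<forall>j<dim_col M. M $$ (i,j) \<in> \<int>)"

definition level :: "rat mat \<Rightarrow> nat" where
  "level Q = (LEAST k. k > 0 \<and> integral_mat (of_nat k \<cdot>\<^sub>m Q))"

definition Qset :: "nat \<Rightarrow> (nat \<Rightarrow> nat \<Rightarrow> bool) \<Rightarrow> rat mat set" where
  "Qset n arc = {Q. regular_rat_orth n Q \<and>
     (\<exists>D. oriented_graph n D \<and> gen_cospectral n arc D \<and>
          transpose_mat Q * skew_adj n arc * Q = skew_adj n D)}"

end

theory Submission
  imports Defs
begin


lemma mult_entry:
  assumes "A \<in> carrier_mat nr n" "B \<in> carrier_mat n nc" "i < nr" "j < nc"
  shows "(A * B) $$ (i,j) = (\<Sum>l<n. A $$ (i,l) * B $$ (l,j))"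
  using assms unfolding index_mult_mat(1)[of i A j B] 
  by (auto simp: scalar_prod_def lessThan_atLeast0 intro!: sum.cong)

lemma pow_entry_Suc:
  assumes "A \<in> carrier_mat n n" "i < n" "j < n"
  shows "(A ^\<^sub>m Suc k) $$ (i,j) = (\<Sum>l<n. (A ^\<^sub>m k) $$ (i,l) * A $$ (l,j))"
  using mult_entry[of "A ^\<^sub>m k" n n A n i j] assms by simp

lemma cayley_hamilton_entry:
  fixes A :: "'a::comm_ring_1 mat"
  assumes A: "A \<in> carrier_mat n n" and i: "i<n" and j: "j<n"
  shows "(\<Sum>s\<le>n. coeff (char_poly A) s * (A ^\<^sub>m s) $$ (i,j)) = 0"
proof -
  define M where "M = char_poly_matrix A"
  define Adj where "Adj = adj_mat M"
  define c where "c s = coeff (char_poly A) s" for s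
  define b where "b s l j = coeff (Adj $$ (l,j)) s" for s l j
  have M: "M \<in> carrier_mat n n" using A unfolding M_def by simp
  have Adj: "Adj \<in> carrier_mat n n" using adj_mat(1)[OF M] unfolding Adj_def .
  have MA: "M * Adj = char_poly A \<cdot>\<^sub>m 1\<^sub>m n" using adj_mat(2)[OF M] 
    by (simp add: char_poly_def M_def Adj_def)
  have Mentry: "M $$ (i,l) = (if i = l then [:0,1:] else 0) + [:- A $$ (i,l):]" if "i < n" "l < n" for i l
    using that A unfolding M_def char_poly_matrix_def by auto
  have E: "(if s = 0 then 0 else b (s-1) i j) - (\<Sum>l<n. A $$ (i,l) * b s l j) = (if i = j then c s else 0)"
    if ij: "i < n" "j < n" for s i j
  proof -
    have "(M * Adj) $$ (i,j) = (\<Sum>l<n. M $$ (i,l) * Adj $$ (l,j))" 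
      using mult_entry[OF M Adj ij] .
    also have "\<dots> = (\<Sum>l<n. (if i = l then [:0,1:] * Adj $$ (l,j) else 0) + [:- A $$ (i,l):] * Adj $$ (l,j))"
      by (rule sum.cong, auto simp: Mentry ij distrib_right)
    also have "\<dots> = [:0,1:] * Adj $$ (i,j) + (\<Sum>l<n. [:- A $$ (i,l):] * Adj $$ (l,j))"
      unfolding sum.distrib using ij by (simp add: sum.delta')
    finally have eq: "(M * Adj) $$ (i,j) = [:0,1:] * Adj $$ (i,j) + (\<Sum>l<n. [:- A $$ (i,l):] * Adj $$ (l,j))" .
    have "coeff ((M * Adj) $$ (i,j)) s = (if i = j then c s else 0)"
      unfolding MA using ij by (simp add: c_def)
    moreover have "coeff ((M * Adj) $$ (i,j)) s = (if s = 0 then 0 else b (s-1) i j) - (\<Sum>l<n. A $$ (i,l) * b s l j)"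
      unfolding eq b_def by (cases s, auto simp: coeff_sum sum_negf)
    ultimately show ?thesis by simp
  qed
  have deg: "b n l j = 0" if "l < n" "j < n" for l j
  proof -
    have "Adj $$ (l,j) = cofactor M j l" using that M unfolding Adj_def adj_mat_def by auto
    also have "\<dots> = (-1)^(j+l) * det (mat_delete M j l)" unfolding cofactor_def ..
    finally have e: "Adj $$ (l,j) = (-1)^(j+l) * det (mat_delete M j l)" .
    have "degree (det (mat_delete M j l)) \<le> 1 * (n - 1)"
    proof (rule degree_det_le)
      show "mat_delete M j l \<in> carrier_mat (n-1) (n-1)" using mat_delete_carrier[OF M] .
      fix i' j' assume ij': "i' < n - 1" "j' < n - 1"
      define r where "r = (if i' < j then i' else Suc i')"
      define t where "t = (if j' < l then j' else Suc j')"
      have rt: "r < n" "t < n" using ij' unfolding r_def t_def by auto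
      have "mat_delete M j l $$ (i', j') = M $$ (r, t)" 
        using ij' M unfolding mat_delete_def r_def t_def by auto
      also have "degree \<dots> \<le> 1" unfolding Mentry[OF rt]
        by (rule order.trans[OF degree_add_le_max], auto)
      finally show "degree (mat_delete M j l $$ (i', j')) \<le> 1" .
    qed
    moreover have "degree (Adj $$ (l,j)) = degree (det (mat_delete M j l))" unfolding e
      by (cases "even (j+l)") (auto simp: degree_minus)
    ultimately have "degree (Adj $$ (l,j)) < n" using that by linarith
    then show ?thesis unfolding b_def by (simp add: coeff_eq_0)
  qed
  have T: "(\<Sum>s\<le>N. c s * (A ^\<^sub>m s) $$ (i,j)) = - (\<Sum>l<n. (A ^\<^sub>m Suc N) $$ (i,l) * b N l j)" for N
  proof (induction N)
    case 0
    have "(\<Sum>l<n. (A ^\<^sub>m Suc 0) $$ (i,l) * b 0 l j) = (\<Sum>l<n. A $$ (i,l) * b 0 l j)"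
      by (rule sum.cong, insert A i, auto)
    then show ?case using E[OF i j, of 0] A i j by auto
  next
    case (Suc N)
    have "c (Suc N) * (A ^\<^sub>m Suc N) $$ (i,j) = (\<Sum>m<n. (A ^\<^sub>m Suc N) $$ (i,m) * (if m = j then c (Suc N) else 0))"
      using j by (simp add: if_distrib cong: if_cong)
    also have "\<dots> = (\<Sum>m<n. (A ^\<^sub>m Suc N) $$ (i,m) * (b N m j - (\<Sum>l<n. A $$ (m,l) * b (Suc N) l j)))"
      by (rule sum.cong, simp, subst E[symmetric], auto simp: j)
    also have "\<dots> = (\<Sum>m<n. (A ^\<^sub>m Suc N) $$ (i,m) * b N m j) - (\<Sum>l<n. (\<Sum>m<n. (A ^\<^sub>m Suc N) $$ (i,m) * A $$ (m,l)) * b (Suc N) l j)"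
    proof -
      have "(\<Sum>m<n. (A ^\<^sub>m Suc N) $$ (i,m) * (b N m j - (\<Sum>l<n. A $$ (m,l) * b (Suc N) l j)))
         = (\<Sum>m<n. (A ^\<^sub>m Suc N) $$ (i,m) * b N m j) - (\<Sum>m<n. \<Sum>l<n. (A ^\<^sub>m Suc N) $$ (i,m) * A $$ (m,l) * b (Suc N) l j)"
        by (simp add: right_diff_distrib sum_subtractf sum_distrib_left mult.assoc)
      also have "(\<Sum>m<n. \<Sum>l<n. (A ^\<^sub>m Suc N) $$ (i,m) * A $$ (m,l) * b (Suc N) l j)
           = (\<Sum>l<n. \<Sum>m<n. (A ^\<^sub>m Suc N) $$ (i,m) * A $$ (m,l) * b (Suc N) l j)"
        by (rule sum.swap)
      also have "\<dots> = (\<Sum>l<n. (\<Sum>m<n. (A ^\<^sub>m Suc N) $$ (i,m) * A $$ (m,l)) * b (Suc N) l j)"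
        by (simp add: sum_distrib_right)
      finally show ?thesis .
    qed
    also have "(\<Sum>l<n. (\<Sum>m<n. (A ^\<^sub>m Suc N) $$ (i,m) * A $$ (m,l)) * b (Suc N) l j) = (\<Sum>l<n. (A ^\<^sub>m Suc (Suc N)) $$ (i,l) * b (Suc N) l j)"
      by (rule sum.cong, simp, subst pow_entry_Suc[OF A i], auto)
    finally show ?case using Suc by simp
  qed
  show ?thesis using T[of n] deg j unfolding c_def by simp
qed



lemma pow_mat_add: assumes A: "A \<in> carrier_mat n n"
  shows "A ^\<^sub>m (a + b) = A ^\<^sub>m a * A ^\<^sub>m b"
proof (induction b)
  case 0 then show ?case using A by simp
next
  case (Suc b)
  have "A ^\<^sub>m (a + Suc b) = (A ^\<^sub>m a * A ^\<^sub>m b) * A" using Suc by simp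
  also have "\<dots> = A ^\<^sub>m a * (A ^\<^sub>m b * A)" using A by (simp add: assoc_mult_mat[of _ n n _ n _ n])
  finally show ?case by simp
qed

lemma pow_mat_Suc_left: assumes A: "A \<in> carrier_mat n n"
  shows "A ^\<^sub>m Suc b = A * A ^\<^sub>m b"
  using pow_mat_add[OF A, of 1 b] A by simp

definition skew :: "nat \<Rightarrow> 'a::ring_1 mat \<Rightarrow> bool" where
  "skew n S \<longleftrightarrow> S \<in> carrier_mat n n \<and> (\<forall>i<n. \<forall>j<n. S $$ (j,i) = - S $$ (i,j))"

lemma skew_pow: fixes S :: "'a::comm_ring_1 mat" assumes sk: "skew n S" and ij: "i < n" "j < n"
  shows "(S ^\<^sub>m t) $$ (j,i) = (-1)^t * (S ^\<^sub>m t) $$ (i,j)"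
  using ij
proof (induction t arbitrary: i j)
  case 0 then show ?case using sk unfolding skew_def by auto
next
  case (Suc t)
  have S: "S \<in> carrier_mat n n" using sk unfolding skew_def by auto
  have "(S ^\<^sub>m Suc t) $$ (j,i) = (\<Sum>l<n. (S ^\<^sub>m t) $$ (j,l) * S $$ (l,i))"
    by (rule pow_entry_Suc[OF S Suc.prems(2,1)])
  also have "\<dots> = (\<Sum>l<n. ((-1)^t * (S ^\<^sub>m t) $$ (l,j)) * (- S $$ (i,l)))"
  proof (rule sum.cong[OF refl])
    fix l assume "l \<in> {..<n}" then have l: "l < n" by simp
    have "(S ^\<^sub>m t) $$ (j,l) = (-1)^t * (S ^\<^sub>m t) $$ (l,j)" by (rule Suc.IH[OF l Suc.prems(2)])
    moreover have "S $$ (l,i) = - S $$ (i,l)" using sk l Suc.prems unfolding skew_def by blast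
    ultimately show "(S ^\<^sub>m t) $$ (j,l) * S $$ (l,i) = ((-1)^t * (S ^\<^sub>m t) $$ (l,j)) * (- S $$ (i,l))" by simp
  qed
  also have "\<dots> = (-1)^Suc t * (\<Sum>l<n. S $$ (i,l) * (S ^\<^sub>m t) $$ (l,j))"
    by (simp add: sum_distrib_left ac_simps)
  also have "(\<Sum>l<n. S $$ (i,l) * (S ^\<^sub>m t) $$ (l,j)) = (S * S ^\<^sub>m t) $$ (i,j)"
    using mult_entry[OF S pow_carrier_mat[OF S, of t] Suc.prems] by simp
  also have "S * S ^\<^sub>m t = S ^\<^sub>m Suc t" using pow_mat_Suc_left[OF S] by simp
  finally show ?case .
qed

lemma skew_pow_odd_diag: fixes S :: "int mat" assumes sk: "skew n S" and i: "i < n" and t: "odd t"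
  shows "(S ^\<^sub>m t) $$ (i,i) = 0"
  using skew_pow[OF sk i i, of t] t by simp

lemma sum_even_odd: "(\<Sum>s\<le>2*k. g s) = (\<Sum>r\<le>k. g (2*r)) + (\<Sum>r<k. g (2*r+1))"
  for g :: "nat \<Rightarrow> 'a::comm_monoid_add"
proof (induction k)
  case 0 then show ?case by simp
next
  case (Suc k)
  have "{..2 * Suc k} = insert (2*k+2) (insert (2*k+1) {..2*k})" by auto
  then have "(\<Sum>s\<le>2*Suc k. g s) = g (2*k+2) + (g (2*k+1) + (\<Sum>s\<le>2*k. g s))" by simp
  then show ?case using Suc by (simp add: ac_simps)
qed

definition ones_int :: "nat \<Rightarrow> int vec" where "ones_int n = vec n (\<lambda>_. 1)"

lemma D_lemma: fixes S :: "int mat" 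
  assumes sk: "skew n S" and i: "i < n"
  shows "even (\<Sum>r\<le>(n + n mod 2) div 2. coeff (monom 1 (n mod 2) * char_poly S) (2*r) * (S ^\<^sub>m r *\<^sub>v ones_int n) $ i)"
proof -
  have S: "S \<in> carrier_mat n n" using sk unfolding skew_def by auto
  define k where "k = (n + n mod 2) div 2"
  define f where "f = monom 1 (n mod 2) * char_poly S"
  define c where "c t = coeff (char_poly S) t" for t
  have CH: "(\<Sum>t\<le>n. c t * (S ^\<^sub>m t) $$ (l,j)) = 0" if "l < n" "j < n" for l j
    using cayley_hamilton_entry[OF S that] unfolding c_def .
  have k2: "2 * k = n + n mod 2" unfolding k_def by auto
  have Z: "(\<Sum>s\<le>2*k. coeff f s * (S ^\<^sub>m s) $$ (i,i)) = 0"
  proof (cases "even n")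
    case True
    then have "2*k = n" "f = char_poly S" using k2 unfolding f_def by auto
    then show ?thesis using CH[OF i i] unfolding c_def by simp
  next
    case False
    then have nm: "n mod 2 = 1" "2 * k = Suc n" using k2 by presburger+
    have "(\<Sum>s\<le>2*k. coeff f s * (S ^\<^sub>m s) $$ (i,i)) = (\<Sum>s\<le>Suc n. coeff f s * (S ^\<^sub>m s) $$ (i,i))"
      using nm by simp
    also have "\<dots> = (\<Sum>t\<le>n. coeff f (Suc t) * (S ^\<^sub>m Suc t) $$ (i,i)) + coeff f 0 * (S ^\<^sub>m 0) $$ (i,i)"
      by (subst sum.atMost_Suc_shift) simp
    also have "coeff f 0 = 0" unfolding f_def nm by (simp add: coeff_monom_mult)
    also have "(\<Sum>t\<le>n. coeff f (Suc t) * (S ^\<^sub>m Suc t) $$ (i,i)) = (\<Sum>t\<le>n. c t * (\<Sum>l<n. S $$ (i,l) * (S ^\<^sub>m t) $$ (l,i)))"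
    proof (rule sum.cong[OF refl])
      fix t
      have "(S ^\<^sub>m Suc t) $$ (i,i) = (S * S ^\<^sub>m t) $$ (i,i)" using pow_mat_Suc_left[OF S] by simp
      also have "\<dots> = (\<Sum>l<n. S $$ (i,l) * (S ^\<^sub>m t) $$ (l,i))"
        by (rule mult_entry[OF S pow_carrier_mat[OF S] i i])
      finally show "coeff f (Suc t) * (S ^\<^sub>m Suc t) $$ (i,i) = c t * (\<Sum>l<n. S $$ (i,l) * (S ^\<^sub>m t) $$ (l,i))"
        unfolding f_def c_def nm by (simp add: coeff_monom_mult)
    qed
    also have "\<dots> = (\<Sum>l<n. S $$ (i,l) * (\<Sum>t\<le>n. c t * (S ^\<^sub>m t) $$ (l,i)))"
    proof -
      have "(\<Sum>t\<le>n. c t * (\<Sum>l<n. S $$ (i,l) * (S ^\<^sub>m t) $$ (l,i))) = (\<Sum>t\<le>n. \<Sum>l<n. S $$ (i,l) * (c t * (S ^\<^sub>m t) $$ (l,i)))"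
        by (simp add: sum_distrib_left ac_simps)
      also have "\<dots> = (\<Sum>l<n. \<Sum>t\<le>n. S $$ (i,l) * (c t * (S ^\<^sub>m t) $$ (l,i)))" by (rule sum.swap)
      also have "\<dots> = (\<Sum>l<n. S $$ (i,l) * (\<Sum>t\<le>n. c t * (S ^\<^sub>m t) $$ (l,i)))" by (simp add: sum_distrib_left)
      finally show ?thesis .
    qed
    also have "\<dots> = 0" using CH i by simp
    finally show ?thesis by simp
  qed
  have Z2: "(\<Sum>r\<le>k. coeff f (2*r) * (S ^\<^sub>m (2*r)) $$ (i,i)) = 0"
  proof -
    have "(\<Sum>r<k. coeff f (2*r+1) * (S ^\<^sub>m (2*r+1)) $$ (i,i)) = 0"
    proof (rule sum.neutral, rule ballI)
      fix r assume "r \<in> {..<k}"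
      have "(S ^\<^sub>m (2*r+1)) $$ (i,i) = 0" by (rule skew_pow_odd_diag[OF sk i], simp)
      then show "coeff f (2*r+1) * (S ^\<^sub>m (2*r+1)) $$ (i,i) = 0" by (simp only: mult_zero_right)
    qed
    then show ?thesis using Z unfolding sum_even_odd by simp
  qed
  have diag: "even ((S ^\<^sub>m r *\<^sub>v ones_int n) $ i - (S ^\<^sub>m (2*r)) $$ (i,i))" for r
  proof -
    have "(S ^\<^sub>m (2*r)) $$ (i,i) = (S ^\<^sub>m r * S ^\<^sub>m r) $$ (i,i)"
      using pow_mat_add[OF S, of r r] by (simp add: mult_2)
    also have "\<dots> = (\<Sum>l<n. (S ^\<^sub>m r) $$ (i,l) * (S ^\<^sub>m r) $$ (l,i))"
      by (rule mult_entry[OF pow_carrier_mat[OF S] pow_carrier_mat[OF S] i i])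
    also have "\<dots> = (\<Sum>l<n. (-1)^r * ((S ^\<^sub>m r) $$ (i,l))^2)"
      by (rule sum.cong, auto simp: skew_pow[OF sk i] power2_eq_square ac_simps)
    finally have a: "(S ^\<^sub>m (2*r)) $$ (i,i) = (\<Sum>l<n. (-1)^r * ((S ^\<^sub>m r) $$ (i,l))^2)" .
    have b: "(S ^\<^sub>m r *\<^sub>v ones_int n) $ i = (\<Sum>l<n. (S ^\<^sub>m r) $$ (i,l))"
      using S i unfolding ones_int_def by (auto simp: scalar_prod_def lessThan_atLeast0)
    have "even ((S ^\<^sub>m r) $$ (i,l) - (-1)^r * ((S ^\<^sub>m r) $$ (i,l))^2)" for l
    proof -
      define x where "x = (S ^\<^sub>m r) $$ (i,l)"
      have "even (x - x^2)" "even (x + x^2)" by (auto simp: power2_eq_square)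
      then show ?thesis unfolding x_def[symmetric] by (cases "even r") auto
    qed
    then show ?thesis unfolding a b sum_subtractf[symmetric] by (intro dvd_sum) auto
  qed
  have "(\<Sum>r\<le>k. coeff f (2*r) * (S ^\<^sub>m r *\<^sub>v ones_int n) $ i) 
     = (\<Sum>r\<le>k. coeff f (2*r) * (S ^\<^sub>m (2*r)) $$ (i,i)) + (\<Sum>r\<le>k. coeff f (2*r) * ((S ^\<^sub>m r *\<^sub>v ones_int n) $ i - (S ^\<^sub>m (2*r)) $$ (i,i)))"
    unfolding sum.distrib[symmetric] by (rule sum.cong) (simp_all add: right_diff_distrib)
  also have "even \<dots>" unfolding Z2 add_0_left by (intro dvd_sum dvd_mult diag)
  finally show ?thesis unfolding k_def f_def .
qed



definition sk :: "nat \<Rightarrow> (nat \<Rightarrow> nat \<Rightarrow> bool) \<Rightarrow> int mat" where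
  "sk n arc = mat n n (\<lambda>(i,j). if arc i j then 1 else if arc j i then -1 else 0)"

lemma sk_carrier[simp]: "sk n arc \<in> carrier_mat n n" unfolding sk_def by simp
lemma sk_dim[simp]: "dim_row (sk n arc) = n" "dim_col (sk n arc) = n" unfolding sk_def by simp_all

lemma skew_adj_sk: "skew_adj n arc = map_mat of_int (sk n arc)"
  unfolding skew_adj_def sk_def by (rule eq_matI) auto

lemma skew_sk: assumes "oriented_graph n arc" shows "skew n (sk n arc)"
  using assms unfolding skew_def oriented_graph_def sk_def by auto

lemma skew_adj_carrier[simp]: "skew_adj n arc \<in> carrier_mat n n" unfolding skew_adj_def by simp

lemma ones_vec_carrier[simp]: "ones_vec n \<in> carrier_vec n" unfolding ones_vec_def by simp

lemma walk_carrier[simp]: "walk_mat n arc \<in> carrier_mat n n" unfolding walk_mat_def carrier_mat_def by simp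

lemma walk_entry: assumes "i < n" "t < n"
  shows "walk_mat n arc $$ (i,t) = ((skew_adj n arc ^\<^sub>m t) *\<^sub>v ones_vec n) $ i"
  using assms unfolding walk_mat_def by (simp add: mat_of_cols_index)

lemma pow_vec_entry_int: assumes "i < n"
  shows "((skew_adj n arc ^\<^sub>m t) *\<^sub>v ones_vec n) $ i = of_int ((sk n arc ^\<^sub>m t *\<^sub>v ones_int n) $ i)"
proof -
  have "skew_adj n arc ^\<^sub>m t = map_mat of_int (sk n arc ^\<^sub>m t)"
    unfolding skew_adj_sk by (simp add: of_int_hom.mat_hom_pow[OF sk_carrier])
  moreover have "ones_vec n = map_vec of_int (ones_int n)" unfolding ones_vec_def ones_int_def by auto
  ultimately have "(skew_adj n arc ^\<^sub>m t) *\<^sub>v ones_vec n = map_vec of_int (sk n arc ^\<^sub>m t *\<^sub>v ones_int n)"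
    by (simp add: of_int_hom.mult_mat_vec_hom[symmetric, of _ n n] ones_int_def)
  moreover have "dim_vec (sk n arc ^\<^sub>m t *\<^sub>v ones_int n) = n" by simp
  ultimately show ?thesis using assms by (simp del: dim_mult_mat_vec)
qed

definition kk :: "nat \<Rightarrow> nat" where "kk n = n - n div 2"

definition pc :: "nat \<Rightarrow> int poly \<Rightarrow> nat \<Rightarrow> int" where
  "pc n f r = coeff (monom 1 (n mod 2) * f) (2*r)"

definition Um :: "nat \<Rightarrow> int poly \<Rightarrow> rat mat" where
  "Um n f = mat n n (\<lambda>(i,j). if j < kk n then (if i = j then 1 else 0)
      else (if j - kk n \<le> i \<and> i \<le> j then of_int (pc n f (i - (j - kk n))) else 0))"

definition dd :: "nat \<Rightarrow> nat \<Rightarrow> rat" where "dd n j = (if j < kk n then 1 else 1/2)"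

definition Dm :: "nat \<Rightarrow> rat mat" where
  "Dm n = mat n n (\<lambda>(i,j). if i = j then dd n j else 0)"

definition Wp :: "nat \<Rightarrow> (nat \<Rightarrow> nat \<Rightarrow> bool) \<Rightarrow> int poly \<Rightarrow> rat mat" where
  "Wp n arc f = walk_mat n arc * Um n f * Dm n"

lemma Um_carrier[simp]: "Um n f \<in> carrier_mat n n" unfolding Um_def by simp
lemma Dm_carrier[simp]: "Dm n \<in> carrier_mat n n" unfolding Dm_def by simp
lemma Um_dim[simp]: "dim_row (Um n f) = n" "dim_col (Um n f) = n" unfolding Um_def by simp_all
lemma Dm_dim[simp]: "dim_row (Dm n) = n" "dim_col (Dm n) = n" unfolding Dm_def by simp_all
lemma Wp_carrier[simp]: "Wp n arc f \<in> carrier_mat n n" unfolding Wp_def 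
  by (rule mult_carrier_mat[OF mult_carrier_mat[OF walk_carrier Um_carrier] Dm_carrier])

lemma mult_Dm_entry: assumes X: "X \<in> carrier_mat n n" and ij: "i < n" "j < n"
  shows "(X * Dm n) $$ (i,j) = X $$ (i,j) * dd n j"
proof -
  have "(X * Dm n) $$ (i,j) = (\<Sum>l<n. X $$ (i,l) * Dm n $$ (l,j))" by (rule mult_entry[OF X Dm_carrier ij])
  also have "\<dots> = (\<Sum>l<n. if l = j then X $$ (i,l) * dd n j else 0)"
    by (rule sum.cong, auto simp: Dm_def ij)
  also have "\<dots> = X $$ (i,j) * dd n j" using ij by simp
  finally show ?thesis .
qed

lemma walk_Um_entry_hi: assumes ij: "i < n" "j < n" and jk: "kk n \<le> j"
  shows "(walk_mat n arc * Um n f) $$ (i,j) = (\<Sum>r\<le>kk n. walk_mat n arc $$ (i, r + (j - kk n)) * of_int (pc n f r))"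
proof -
  define d where "d = j - kk n"
  have "(walk_mat n arc * Um n f) $$ (i,j) = (\<Sum>t<n. walk_mat n arc $$ (i,t) * Um n f $$ (t,j))"
    by (rule mult_entry[OF walk_carrier Um_carrier ij])
  also have "\<dots> = (\<Sum>t<n. if t \<in> {d..j} then walk_mat n arc $$ (i,t) * of_int (pc n f (t - d)) else 0)"
    by (rule sum.cong, insert jk ij, auto simp: Um_def d_def)
  also have "\<dots> = (\<Sum>t\<in>{d..j}. walk_mat n arc $$ (i,t) * of_int (pc n f (t - d)))"
    by (subst sum.If_cases, insert ij, auto intro!: sum.cong)
  also have "\<dots> = (\<Sum>r\<le>kk n. walk_mat n arc $$ (i, r + d) * of_int (pc n f r))"
  proof -
    have "{d..j} = (\<lambda>r. r + d) ` {..kk n}" using jk unfolding d_def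
    proof (auto simp: image_iff)
      fix x assume "kk n \<le> j" "j - kk n \<le> x" "x \<le> j"
      then show "\<exists>xa\<in>{..kk n}. x = xa + j - kk n" by (intro bexI[of _ "x - (j - kk n)"]) auto
    qed
    moreover have "inj_on (\<lambda>r. r + d) {..kk n}" by (auto simp: inj_on_def)
    ultimately show ?thesis by (simp add: sum.reindex)
  qed
  finally show ?thesis unfolding d_def .
qed

lemma kk_alt: "(n + n mod 2) div 2 = kk n" unfolding kk_def by presburger

lemma mat_vec_entry: assumes "A \<in> carrier_mat n n" "v \<in> carrier_vec n" "i < n"
  shows "(A *\<^sub>v v) $ i = (\<Sum>l<n. A $$ (i,l) * v $ l)"
  using assms by (auto simp: scalar_prod_def lessThan_atLeast0 intro!: sum.cong)

lemma ones_int_carrier[simp]: "ones_int n \<in> carrier_vec n" unfolding ones_int_def by simp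

lemma walk_int_entry: assumes "i < n" "t < n"
  shows "walk_mat n arc $$ (i,t) = of_int ((sk n arc ^\<^sub>m t *\<^sub>v ones_int n) $ i)"
  using walk_entry[OF assms] pow_vec_entry_int[OF assms(1)] by simp

lemma Wp_integral_entry: assumes og: "oriented_graph n arc" and f: "f = char_poly (sk n arc)"
  and ij: "i < n" "j < n"
  shows "Wp n arc f $$ (i,j) \<in> \<int>"
proof -
  define S where "S = sk n arc"
  have S: "S \<in> carrier_mat n n" unfolding S_def by simp
  have WU: "walk_mat n arc * Um n f \<in> carrier_mat n n" by (rule mult_carrier_mat[OF walk_carrier Um_carrier])
  have e: "Wp n arc f $$ (i,j) = (walk_mat n arc * Um n f) $$ (i,j) * dd n j"
    unfolding Wp_def by (rule mult_Dm_entry[OF WU ij])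
  show ?thesis
  proof (cases "j < kk n")
    case True
    have "(walk_mat n arc * Um n f) $$ (i,j) = (\<Sum>t<n. walk_mat n arc $$ (i,t) * Um n f $$ (t,j))"
      by (rule mult_entry[OF walk_carrier Um_carrier ij])
    also have "\<dots> = (\<Sum>t<n. if t = j then walk_mat n arc $$ (i,t) else 0)"
      by (rule sum.cong, insert True ij, auto simp: Um_def)
    also have "\<dots> = walk_mat n arc $$ (i,j)" using ij by simp
    finally show ?thesis unfolding e using True walk_int_entry[OF ij] by (simp add: dd_def)
  next
    case False
    define d where "d = j - kk n"
    define z where "z l = (\<Sum>r\<le>kk n. pc n f r * (S ^\<^sub>m r *\<^sub>v ones_int n) $ l)" for l
    have ev: "even (z l)" if "l < n" for l
      using D_lemma[OF skew_sk[OF og] that] unfolding z_def pc_def f kk_alt S_def .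
    have "(walk_mat n arc * Um n f) $$ (i,j) = (\<Sum>r\<le>kk n. walk_mat n arc $$ (i, r + d) * of_int (pc n f r))"
      using walk_Um_entry_hi[OF ij] False unfolding d_def by simp
    also have "\<dots> = (\<Sum>r\<le>kk n. of_int ((\<Sum>l<n. (S ^\<^sub>m d) $$ (i,l) * (S ^\<^sub>m r *\<^sub>v ones_int n) $ l) * pc n f r))"
    proof (rule sum.cong[OF refl])
      fix r assume "r \<in> {..kk n}"
      then have rd: "r + d < n" using ij False unfolding d_def by auto
      have "(S ^\<^sub>m (r + d) *\<^sub>v ones_int n) $ i = ((S ^\<^sub>m d * S ^\<^sub>m r) *\<^sub>v ones_int n) $ i"
        using pow_mat_add[OF S, of d r] by (simp add: add.commute)
      also have "\<dots> = (S ^\<^sub>m d *\<^sub>v (S ^\<^sub>m r *\<^sub>v ones_int n)) $ i"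
        by (subst assoc_mult_mat_vec[of _ n n _ n], auto simp: S)
      also have "\<dots> = (\<Sum>l<n. (S ^\<^sub>m d) $$ (i,l) * (S ^\<^sub>m r *\<^sub>v ones_int n) $ l)"
        by (rule mat_vec_entry, insert S ij, auto intro!: mult_mat_vec_carrier[of _ n n])
      finally show "walk_mat n arc $$ (i, r + d) * of_int (pc n f r) = of_int ((\<Sum>l<n. (S ^\<^sub>m d) $$ (i,l) * (S ^\<^sub>m r *\<^sub>v ones_int n) $ l) * pc n f r)"
        using walk_int_entry[OF ij(1) rd] unfolding S_def by simp
    qed
    also have "\<dots> = of_int (\<Sum>l<n. (S ^\<^sub>m d) $$ (i,l) * z l)"
      unfolding of_int_sum[symmetric] z_def
      by (simp add: sum_distrib_left sum_distrib_right ac_simps sum.swap[of _ "{..kk n}" "{..<n}"])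
    finally have eq: "(walk_mat n arc * Um n f) $$ (i,j) = of_int (\<Sum>l<n. (S ^\<^sub>m d) $$ (i,l) * z l)" .
    have "even (\<Sum>l<n. (S ^\<^sub>m d) $$ (i,l) * z l)" by (intro dvd_sum dvd_mult ev, simp)
    then obtain w where w: "(\<Sum>l<n. (S ^\<^sub>m d) $$ (i,l) * z l) = 2 * w" by blast
    show ?thesis unfolding e eq w using False by (simp add: dd_def)
  qed
qed

lemma pc_top: assumes "coeff f n = 1" shows "pc n f (kk n) = 1"
proof -
  have "2 * kk n = n + n mod 2" unfolding kk_def by presburger
  then show ?thesis using assms unfolding pc_def by (simp add: coeff_monom_mult)
qed

lemma det_Um: assumes "coeff f n = 1" shows "det (Um n f) = 1"
proof -
  have ut: "upper_triangular (Um n f)" unfolding upper_triangular_def Um_def by auto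
  have "det (Um n f) = (\<Prod>i = 0..<n. Um n f $$ (i,i))"
    unfolding det_upper_triangular[OF ut Um_carrier] prod_list_diag_prod by simp
  also have "\<dots> = (\<Prod>i = 0..<n. 1)" by (rule prod.cong, auto simp: Um_def pc_top[OF assms])
  finally show ?thesis by simp
qed

lemma det_Dm: "det (Dm n) = (1/2) ^ (n div 2)"
proof -
  have ut: "upper_triangular (Dm n)" unfolding upper_triangular_def Dm_def by auto
  have "det (Dm n) = (\<Prod>i = 0..<n. Dm n $$ (i,i))"
    unfolding det_upper_triangular[OF ut Dm_carrier] prod_list_diag_prod by simp
  also have "\<dots> = (\<Prod>i = 0..<n. dd n i)" by (rule prod.cong, auto simp: Dm_def)
  also have "\<dots> = (\<Prod>i \<in> {0..<kk n} \<union> {kk n..<n}. dd n i)" 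
    by (rule prod.cong, auto simp: kk_def)
  also have "\<dots> = (\<Prod>i \<in> {0..<kk n}. dd n i) * (\<Prod>i \<in> {kk n..<n}. dd n i)"
    by (rule prod.union_disjoint, auto)
  also have "(\<Prod>i \<in> {0..<kk n}. dd n i) = 1" by (rule prod.neutral, auto simp: dd_def)
  also have "(\<Prod>i \<in> {kk n..<n}. dd n i) = (\<Prod>i \<in> {kk n..<n}. 1/2)" by (rule prod.cong, auto simp: dd_def)
  also have "\<dots> = (1/2) ^ (n div 2)" by (simp add: kk_def)
  finally show ?thesis by simp
qed

lemma det_Wp: assumes "coeff f n = 1" shows "det (Wp n arc f) = det (walk_mat n arc) * (1/2) ^ (n div 2)"
proof -
  have WU: "walk_mat n arc * Um n f \<in> carrier_mat n n" by (rule mult_carrier_mat[OF walk_carrier Um_carrier])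
  show ?thesis unfolding Wp_def det_mult[OF WU Dm_carrier] det_mult[OF walk_carrier Um_carrier]
    det_Um[OF assms] det_Dm by simp
qed

lemma char_poly_sk_top: "coeff (char_poly (sk n arc)) n = 1"
  using degree_monic_char_poly[OF sk_carrier] by blast



lemma integral_mat_smult_iff:
  "integral_mat (of_nat k \<cdot>\<^sub>m Q) \<longleftrightarrow> (\<forall>i<dim_row Q. \<forall>j<dim_col Q. of_nat k * Q $$ (i,j) \<in> \<int>)"
  unfolding integral_mat_def by auto

lemma rat_denom_mult: fixes q :: rat assumes "int (nat (snd (quotient_of q))) dvd k"
  shows "of_int k * q \<in> \<int>"
proof -
  obtain a b where ab: "quotient_of q = (a,b)" by fastforce
  have b: "b > 0" using quotient_of_denom_pos[OF ab] .
  have q: "q = of_int a / of_int b" using quotient_of_div[OF ab] .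
  from assms ab b obtain c where k: "k = b * c" by auto
  have "of_int k * q = of_int (c * a)" unfolding q k using b by (simp add: field_simps)
  then show ?thesis by simp
qed

lemma level_exists: "\<exists>k>0. integral_mat (of_nat k \<cdot>\<^sub>m (Q :: rat mat))"
proof -
  define D where "D = (\<Prod>p\<in>{0..<dim_row Q} \<times> {0..<dim_col Q}. nat (snd (quotient_of (Q $$ p))))"
  have pos: "nat (snd (quotient_of (Q $$ p))) > 0" for p using quotient_of_denom_pos' by simp
  have D: "D > 0" unfolding D_def using pos by (intro prod_pos) auto
  have "of_nat D * Q $$ (i,j) \<in> \<int>" if "i < dim_row Q" "j < dim_col Q" for i j
  proof -
    have "nat (snd (quotient_of (Q $$ (i,j)))) dvd D" unfolding D_def
      by (rule dvd_prodI, insert that, auto)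
    then have "int (nat (snd (quotient_of (Q $$ (i,j))))) dvd int D" by (rule int_dvd_int_iff[THEN iffD2])
    from rat_denom_mult[OF this] show ?thesis by simp
  qed
  then show ?thesis using D unfolding integral_mat_smult_iff by blast
qed

lemma level_pos: "level Q > 0" and level_integral: "integral_mat (of_nat (level Q) \<cdot>\<^sub>m Q)"
proof -
  from level_exists[of Q] obtain k where "k > 0 \<and> integral_mat (of_nat k \<cdot>\<^sub>m Q)" by blast
  then have "level Q > 0 \<and> integral_mat (of_nat (level Q) \<cdot>\<^sub>m Q)"
    unfolding level_def by (rule LeastI)
  then show "level Q > 0" "integral_mat (of_nat (level Q) \<cdot>\<^sub>m Q)" by auto
qed

lemma level_le: "k > 0 \<Longrightarrow> integral_mat (of_nat k \<cdot>\<^sub>m Q) \<Longrightarrow> level Q \<le> k"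
  unfolding level_def by (rule Least_le) auto

lemma level_dvd: assumes k: "k > 0" and I: "integral_mat (of_nat k \<cdot>\<^sub>m Q)"
  shows "level Q dvd k"
proof -
  define l where "l = level Q"
  have l: "l > 0" "integral_mat (of_nat l \<cdot>\<^sub>m Q)" unfolding l_def using level_pos level_integral by auto
  define g where "g = gcd l k"
  have g: "g > 0" unfolding g_def using l by simp
  obtain u v where uv: "u * int l + v * int k = gcd (int l) (int k)" using bezout_int by blast
  have gi: "int g = gcd (int l) (int k)" unfolding g_def by (simp add: gcd_int_def)
  have "of_nat g * Q $$ (i,j) \<in> \<int>" if "i < dim_row Q" "j < dim_col Q" for i j
  proof -
    have a: "of_nat l * Q $$ (i,j) \<in> \<int>" "of_nat k * Q $$ (i,j) \<in> \<int>"
      using l(2) I that unfolding integral_mat_smult_iff by auto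
    have "(of_nat g :: rat) = of_int u * of_nat l + of_int v * of_nat k"
    proof -
      have "(of_nat g :: rat) = of_int (int g)" by simp
      also have "\<dots> = of_int (u * int l + v * int k)" unfolding gi uv ..
      finally show ?thesis by simp
    qed
    then have "of_nat g * Q $$ (i,j) = of_int u * (of_nat l * Q $$ (i,j)) + of_int v * (of_nat k * Q $$ (i,j))"
      by (simp add: algebra_simps)
    then show ?thesis using a by simp
  qed
  then have "integral_mat (of_nat g \<cdot>\<^sub>m Q)" unfolding integral_mat_smult_iff by blast
  from level_le[OF g this] have "l \<le> g" unfolding l_def .
  moreover have "g dvd l" unfolding g_def by simp
  ultimately have "g = l" using l by (simp add: dvd_antisym dvd_imp_le le_antisym)
  then show ?thesis unfolding l_def[symmetric] g_def by (metis gcd_dvd2)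
qed



lemma adj_not_all_dvd: fixes M :: "int mat"
  assumes M: "M \<in> carrier_mat n n" and p: "prime p" and pd: "p dvd det M" and npd: "\<not> p^2 dvd det M"
    and n: "n > 0"
  shows "\<exists>i<n. \<exists>j<n. \<not> p dvd adj_mat M $$ (i,j)"
proof (rule ccontr)
  assume "\<not> ?thesis"
  then have all: "p dvd adj_mat M $$ (i,j)" if "i < n" "j < n" for i j using that by auto
  have A: "adj_mat M \<in> carrier_mat n n" using adj_mat(1)[OF M] .
  define B where "B = map_mat (\<lambda>x. x div p) (adj_mat M)"
  have B: "B \<in> carrier_mat n n" unfolding B_def using A by simp
  have AB: "adj_mat M = p \<cdot>\<^sub>m B"
    by (rule eq_matI, insert A all, auto simp: B_def)
  have dM: "det M \<noteq> 0" using npd by auto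
  have "det (M * adj_mat M) = det M * det (adj_mat M)" by (rule det_mult[OF M A])
  also have "det (adj_mat M) = p ^ n * det B" unfolding AB using B by simp
  also have "M * adj_mat M = det M \<cdot>\<^sub>m 1\<^sub>m n" using adj_mat(2)[OF M] .
  finally have "det M ^ n = det M * (p ^ n * det B)" by simp
  moreover have "det M ^ n = det M * det M ^ (n - 1)" using n by (cases n) auto
  ultimately have e1: "det M ^ (n-1) = p ^ n * det B" using dM by simp
  obtain d where d: "det M = p * d" using pd by blast
  have nd: "\<not> p dvd d" using npd unfolding d power2_eq_square by auto
  have "p ^ (n-1) * d ^ (n-1) = p ^ (n-1) * (p * det B)" 
    using e1 n unfolding d by (cases n) (auto simp: power_mult_distrib)
  then have "d ^ (n-1) = p * det B" using p by (simp add: prime_gt_0_int)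
  then have "p dvd d ^ (n-1)" by simp
  then have "p dvd d" using p prime_dvd_power by blast
  with nd show False ..
qed

lemma adj_prop: fixes M :: "int mat"
  assumes M: "M \<in> carrier_mat n n" and x: "x \<in> carrier_vec n"
    and Mx: "\<And>r. r < n \<Longrightarrow> p dvd (M *\<^sub>v x) $ r" and i0: "i0 < n" and j0: "j0 < n" and r: "r < n"
  shows "p dvd (adj_mat M $$ (i0,j0) * x $ r - x $ i0 * adj_mat M $$ (r,j0))"
proof -
  define N where "N = mat n n (\<lambda>(r,s). if r = j0 then (if s = i0 then 1 else 0) else M $$ (r,s))"
  have N: "N \<in> carrier_mat n n" unfolding N_def by simp
  have del: "mat_delete N j0 s = mat_delete M j0 s" for s
    by (rule eq_matI, insert M, auto simp: mat_delete_def N_def)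
  have cof: "cofactor N j0 s = cofactor M j0 s" for s unfolding cofactor_def del ..
  have adjN: "adj_mat N $$ (t, j0) = adj_mat M $$ (t, j0)" if "t < n" for t
    using that j0 M N unfolding adj_mat_def by (simp add: cof)
  have "det N = (\<Sum>s<n. N $$ (j0,s) * cofactor N j0 s)" by (rule laplace_expansion_row[OF N j0])
  also have "\<dots> = (\<Sum>s<n. if s = i0 then cofactor N j0 s else 0)" 
    by (rule sum.cong, auto simp: N_def j0)
  also have "\<dots> = cofactor M j0 i0" using i0 by (simp add: cof)
  also have "\<dots> = adj_mat M $$ (i0, j0)" using M i0 j0 unfolding adj_mat_def by simp
  finally have detN: "det N = adj_mat M $$ (i0, j0)" .
  have AN: "adj_mat N \<in> carrier_mat n n" using adj_mat(1)[OF N] .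
  have Nx: "N *\<^sub>v x \<in> carrier_vec n" using N x by simp
  have "((adj_mat N * N) *\<^sub>v x) $ r = det N * x $ r" unfolding adj_mat(3)[OF N] using x r by auto
  also have "(adj_mat N * N) *\<^sub>v x = adj_mat N *\<^sub>v (N *\<^sub>v x)" using AN N x by simp
  finally have e: "(adj_mat N *\<^sub>v (N *\<^sub>v x)) $ r = det N * x $ r" .
  have "(adj_mat N *\<^sub>v (N *\<^sub>v x)) $ r = (\<Sum>s<n. adj_mat N $$ (r,s) * (N *\<^sub>v x) $ s)"
    by (rule mat_vec_entry[OF AN Nx r])
  also have "\<dots> = (\<Sum>s<n. if s = j0 then adj_mat N $$ (r,j0) * x $ i0 else adj_mat N $$ (r,s) * (M *\<^sub>v x) $ s)"
  proof (rule sum.cong[OF refl])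
    fix s assume "s \<in> {..<n}" then have s: "s < n" by simp
    have "(N *\<^sub>v x) $ s = (\<Sum>l<n. N $$ (s,l) * x $ l)" by (rule mat_vec_entry[OF N x s])
    also have "\<dots> = (if s = j0 then x $ i0 else (M *\<^sub>v x) $ s)"
    proof (cases "s = j0")
      case True
      have "(\<Sum>l<n. N $$ (s,l) * x $ l) = (\<Sum>l<n. if l = i0 then x $ l else 0)" 
        by (rule sum.cong) (auto simp: N_def True s j0)
      then show ?thesis using True i0 by simp
    next
      case False
      have "(\<Sum>l<n. N $$ (s,l) * x $ l) = (\<Sum>l<n. M $$ (s,l) * x $ l)" 
        by (rule sum.cong) (auto simp: N_def False s)
      then show ?thesis using False mat_vec_entry[OF M x s] by simp
    qed
    finally show "adj_mat N $$ (r,s) * (N *\<^sub>v x) $ s = (if s = j0 then adj_mat N $$ (r,j0) * x $ i0 else adj_mat N $$ (r,s) * (M *\<^sub>v x) $ s)"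
      by auto
  qed
  also have "\<dots> = adj_mat N $$ (r,j0) * x $ i0 + (\<Sum>s\<in>{..<n} - {j0}. adj_mat N $$ (r,s) * (M *\<^sub>v x) $ s)"
    using j0 by (simp add: sum.If_cases Int_absorb1 Diff_eq)
  finally have e2: "det N * x $ r = adj_mat N $$ (r,j0) * x $ i0 + (\<Sum>s\<in>{..<n} - {j0}. adj_mat N $$ (r,s) * (M *\<^sub>v x) $ s)"
    unfolding e .
  have "p dvd (\<Sum>s\<in>{..<n} - {j0}. adj_mat N $$ (r,s) * (M *\<^sub>v x) $ s)"
    by (rule dvd_sum, rule dvd_mult, rule Mx, auto)
  then show ?thesis using e2 unfolding detN adjN[OF r] by (simp add: ac_simps)
qed

lemma dvd_from_diff: "x - y = z \<Longrightarrow> p dvd x \<Longrightarrow> p dvd z \<Longrightarrow> p dvd (y::int)"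
proof -
  assume "x - y = z" "p dvd x" "p dvd z"
  then have "y = x - z" by simp
  then show ?thesis using \<open>p dvd x\<close> \<open>p dvd z\<close> by simp
qed

lemma dvd_from_diff2: "x - y = z \<Longrightarrow> p dvd z \<Longrightarrow> p dvd y \<Longrightarrow> p dvd (x::int)"
proof -
  assume "x - y = z" "p dvd z" "p dvd y"
  then have "x = z + y" by simp
  then show ?thesis using \<open>p dvd z\<close> \<open>p dvd y\<close> by simp
qed

lemma tmult_entry: assumes "Y \<in> carrier_mat n n" "X \<in> carrier_mat n n" "u < n" "v < n"
  shows "(transpose_mat Y * X) $$ (u,v) = (\<Sum>r<n. Y $$ (r,u) * X $$ (r,v))"
  using mult_entry[of "transpose_mat Y" n n X n u v] assms by simp

lemma col_prop: fixes M X :: "int mat"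
  assumes M: "M \<in> carrier_mat n n" and X: "X \<in> carrier_mat n n"
    and MX: "\<And>i j. i < n \<Longrightarrow> j < n \<Longrightarrow> p dvd (M * X) $$ (i,j)"
    and i0: "i0 < n" and j0: "j0 < n" and r: "r < n" and v: "v < n"
  shows "p dvd (adj_mat M $$ (i0,j0) * X $$ (r,v) - X $$ (i0,v) * adj_mat M $$ (r,j0))"
proof -
  have x: "col X v \<in> carrier_vec n" using X by (simp add: carrier_vecI)
  have "p dvd (M *\<^sub>v col X v) $ r" if "r < n" for r
    using MX[OF that v] M X that v by simp
  from adj_prop[OF M x this i0 j0 r] show ?thesis using X r v i0 by simp
qed

lemma core: fixes M X Y :: "int mat"
  assumes M: "M \<in> carrier_mat n n" and X: "X \<in> carrier_mat n n" and Y: "Y \<in> carrier_mat n n"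
    and p: "prime p" and pd: "p dvd det M" and npd: "\<not> p^2 dvd det M"
    and MX: "\<And>i j. i < n \<Longrightarrow> j < n \<Longrightarrow> p dvd (M * X) $$ (i,j)"
    and MY: "\<And>i j. i < n \<Longrightarrow> j < n \<Longrightarrow> p dvd (M * Y) $$ (i,j)"
    and XX: "\<And>i j. i < n \<Longrightarrow> j < n \<Longrightarrow> p dvd (transpose_mat X * X) $$ (i,j)"
    and Xnz: "\<exists>i<n. \<exists>j<n. \<not> p dvd X $$ (i,j)"
    and u: "u < n" and v: "v < n"
  shows "p dvd (transpose_mat Y * X) $$ (u,v)"
proof -
  have n: "n > 0" using u by simp
  obtain i0 j0 where ij0: "i0 < n" "j0 < n" and na: "\<not> p dvd adj_mat M $$ (i0,j0)"
    using adj_not_all_dvd[OF M p pd npd n] by blast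
  define a where "a = adj_mat M $$ (i0,j0)"
  define c where "c r = adj_mat M $$ (r,j0)" for r
  have PX: "p dvd (a * X $$ (r,v) - X $$ (i0,v) * c r)" if "r < n" "v < n" for r v
    using col_prop[OF M X MX ij0 that] unfolding a_def c_def .
  have PY: "p dvd (a * Y $$ (r,v) - Y $$ (i0,v) * c r)" if "r < n" "v < n" for r v
    using col_prop[OF M Y MY ij0 that] unfolding a_def c_def .
  have pna: "\<not> p dvd a" using na unfolding a_def .
  obtain v0 where v0: "v0 < n" and t: "\<not> p dvd X $$ (i0,v0)"
  proof -
    { assume all: "\<forall>v<n. p dvd X $$ (i0,v)"
      have "p dvd X $$ (r,v)" if "r < n" "v < n" for r v
      proof -
        have "p dvd X $$ (i0,v) * c r" using all that by simp
        with PX[OF that] have "p dvd a * X $$ (r,v)" using dvd_add[of p _ "X $$ (i0,v) * c r"] by fastforce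
        then show ?thesis using pna p by (simp add: prime_dvd_mult_iff)
      qed
      with Xnz have False by blast }
    then show ?thesis using that by blast
  qed
  define t0 where "t0 = X $$ (i0,v0)"
  have cc: "p dvd (\<Sum>r<n. c r * c r)"
  proof -
    have "a * a * (transpose_mat X * X) $$ (v0,v0) - t0 * t0 * (\<Sum>r<n. c r * c r)
       = (\<Sum>r<n. (a * X $$ (r,v0) - t0 * c r) * (a * X $$ (r,v0) + t0 * c r))"
      unfolding tmult_entry[OF X X v0 v0] 
      by (simp add: sum_distrib_left sum_subtractf[symmetric] algebra_simps)
    moreover have "p dvd (\<Sum>r<n. (a * X $$ (r,v0) - t0 * c r) * (a * X $$ (r,v0) + t0 * c r))"
      unfolding t0_def by (intro dvd_sum dvd_mult2 PX v0) auto
    moreover have "p dvd a * a * (transpose_mat X * X) $$ (v0,v0)" by (rule dvd_mult, rule XX[OF v0 v0])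
    ultimately have "p dvd t0 * t0 * (\<Sum>r<n. c r * c r)"
      using dvd_from_diff by metis
    then show ?thesis using t p unfolding t0_def by (simp add: prime_dvd_mult_iff)
  qed
  have "a * a * (transpose_mat Y * X) $$ (u,v) - Y $$ (i0,u) * X $$ (i0,v) * (\<Sum>r<n. c r * c r)
     = (\<Sum>r<n. (a * Y $$ (r,u) - Y $$ (i0,u) * c r) * (a * X $$ (r,v)) + Y $$ (i0,u) * c r * (a * X $$ (r,v) - X $$ (i0,v) * c r))"
    unfolding tmult_entry[OF Y X u v] 
    by (simp add: sum_distrib_left sum_subtractf[symmetric] sum.distrib[symmetric] algebra_simps)
  moreover have "p dvd (\<Sum>r<n. (a * Y $$ (r,u) - Y $$ (i0,u) * c r) * (a * X $$ (r,v)) + Y $$ (i0,u) * c r * (a * X $$ (r,v) - X $$ (i0,v) * c r))"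
    by (intro dvd_sum dvd_add dvd_mult2 dvd_mult PX PY u v) auto
  moreover have "p dvd Y $$ (i0,u) * X $$ (i0,v) * (\<Sum>r<n. c r * c r)" by (rule dvd_mult, rule cc)
  ultimately have "p dvd a * a * (transpose_mat Y * X) $$ (u,v)"
    using dvd_from_diff2 by metis
  then show ?thesis using pna p by (simp add: prime_dvd_mult_iff)
qed

lemma expand_sum: fixes c A B :: "nat \<Rightarrow> int"
  shows "(\<Sum>r<n. (\<alpha> * c r + p * A r) * (\<beta> * c r + p * B r)) = 
    \<alpha> * \<beta> * (\<Sum>r<n. c r * c r) + p * (\<alpha> * (\<Sum>r<n. c r * B r) + \<beta> * (\<Sum>r<n. c r * A r)) + p^2 * (\<Sum>r<n. A r * B r)"
  by (simp add: sum.distrib sum_distrib_left algebra_simps power2_eq_square)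

lemma exists_nonzero_row: fixes M X :: "int mat"
  assumes M: "M \<in> carrier_mat n n" and X: "X \<in> carrier_mat n n" and p: "prime p"
    and MX: "\<And>i j. i < n \<Longrightarrow> j < n \<Longrightarrow> p dvd (M * X) $$ (i,j)"
    and Xnz: "\<exists>i<n. \<exists>j<n. \<not> p dvd X $$ (i,j)"
    and ij0: "i0 < n" "j0 < n" and na: "\<not> p dvd adj_mat M $$ (i0,j0)"
  shows "\<exists>v0<n. \<not> p dvd X $$ (i0,v0)"
proof (rule ccontr)
  assume "\<not> ?thesis"
  then have all: "\<forall>v<n. p dvd X $$ (i0,v)" by auto
  have "p dvd X $$ (r,v)" if "r < n" "v < n" for r v
  proof -
    have "p dvd X $$ (i0,v) * adj_mat M $$ (r,j0)" using all that by simp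
    with col_prop[OF M X MX ij0 that] have "p dvd adj_mat M $$ (i0,j0) * X $$ (r,v)" 
      using dvd_add[of p _ "X $$ (i0,v) * adj_mat M $$ (r,j0)"] by fastforce
    then show ?thesis using na p by (simp add: prime_dvd_mult_iff)
  qed
  with Xnz show False by blast
qed

lemma core2: fixes M X Y :: "int mat"
  assumes M: "M \<in> carrier_mat n n" and X: "X \<in> carrier_mat n n" and Y: "Y \<in> carrier_mat n n"
    and p: "prime p" and p2: "p \<noteq> 2" and pd: "p dvd det M" and npd: "\<not> p^2 dvd det M"
    and MX: "\<And>i j. i < n \<Longrightarrow> j < n \<Longrightarrow> p dvd (M * X) $$ (i,j)"
    and MY: "\<And>i j. i < n \<Longrightarrow> j < n \<Longrightarrow> p dvd (M * Y) $$ (i,j)"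
    and XX: "\<And>i j. i < n \<Longrightarrow> j < n \<Longrightarrow> p^2 dvd (transpose_mat X * X) $$ (i,j)"
    and YY: "\<And>i j. i < n \<Longrightarrow> j < n \<Longrightarrow> p^2 dvd (transpose_mat Y * Y) $$ (i,j)"
    and Xnz: "\<exists>i<n. \<exists>j<n. \<not> p dvd X $$ (i,j)"
    and Ynz: "\<exists>i<n. \<exists>j<n. \<not> p dvd Y $$ (i,j)"
    and u: "u < n" and v: "v < n"
  shows "p^2 dvd (transpose_mat Y * X) $$ (u,v)"
proof -
  have n: "n > 0" using u by simp
  have p0: "p \<noteq> 0" using p by auto
  obtain i0 j0 where ij0: "i0 < n" "j0 < n" and na: "\<not> p dvd adj_mat M $$ (i0,j0)"
    using adj_not_all_dvd[OF M p pd npd n] by blast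
  define a where "a = adj_mat M $$ (i0,j0)"
  define c where "c r = adj_mat M $$ (r,j0)" for r
  define x where "x v = X $$ (i0,v)" for v
  define y where "y v = Y $$ (i0,v)" for v
  define A where "A r v = (a * X $$ (r,v) - x v * c r) div p" for r v
  define B where "B r v = (a * Y $$ (r,v) - y v * c r) div p" for r v
  have pna: "\<not> p dvd a" using na unfolding a_def .
  have aX: "a * X $$ (r,v) = x v * c r + p * A r v" if "r < n" "v < n" for r v
    using col_prop[OF M X MX ij0 that] unfolding a_def c_def x_def A_def by auto
  have aY: "a * Y $$ (r,v) = y v * c r + p * B r v" if "r < n" "v < n" for r v
    using col_prop[OF M Y MY ij0 that] unfolding a_def c_def y_def B_def by auto
  obtain v0 where v0: "v0 < n" "\<not> p dvd x v0"
    using exists_nonzero_row[OF M X p MX Xnz ij0 na] unfolding x_def by blast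
  obtain u0 where u0: "u0 < n" "\<not> p dvd y u0"
    using exists_nonzero_row[OF M Y p MY Ynz ij0 na] unfolding y_def by blast
  define C where "C = (\<Sum>r<n. c r * c r)"
  define s where "s v = (\<Sum>r<n. c r * A r v)" for v
  define t where "t v = (\<Sum>r<n. c r * B r v)" for v
  have exX: "a * a * (transpose_mat X * X) $$ (w,v) = x w * x v * C + p * (x w * s v + x v * s w) + p^2 * (\<Sum>r<n. A r w * A r v)"
    if "w < n" "v < n" for w v
  proof -
    have "a * a * (transpose_mat X * X) $$ (w,v) = (\<Sum>r<n. (a * X $$ (r,w)) * (a * X $$ (r,v)))"
      unfolding tmult_entry[OF X X that] by (simp add: sum_distrib_left ac_simps)
    also have "\<dots> = (\<Sum>r<n. (x w * c r + p * A r w) * (x v * c r + p * A r v))"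
      by (rule sum.cong, auto simp: aX that)
    finally show ?thesis unfolding expand_sum C_def s_def by (simp add: ac_simps)
  qed
  have exY: "a * a * (transpose_mat Y * Y) $$ (w,v) = y w * y v * C + p * (y w * t v + y v * t w) + p^2 * (\<Sum>r<n. B r w * B r v)"
    if "w < n" "v < n" for w v
  proof -
    have "a * a * (transpose_mat Y * Y) $$ (w,v) = (\<Sum>r<n. (a * Y $$ (r,w)) * (a * Y $$ (r,v)))"
      unfolding tmult_entry[OF Y Y that] by (simp add: sum_distrib_left ac_simps)
    also have "\<dots> = (\<Sum>r<n. (y w * c r + p * B r w) * (y v * c r + p * B r v))"
      by (rule sum.cong, auto simp: aY that)
    finally show ?thesis unfolding expand_sum C_def t_def by (simp add: ac_simps)
  qed
  have exYX: "a * a * (transpose_mat Y * X) $$ (u,v) = y u * x v * C + p * (y u * s v + x v * t u) + p^2 * (\<Sum>r<n. B r u * A r v)"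
  proof -
    have "a * a * (transpose_mat Y * X) $$ (u,v) = (\<Sum>r<n. (a * Y $$ (r,u)) * (a * X $$ (r,v)))"
      unfolding tmult_entry[OF Y X u v] by (simp add: sum_distrib_left ac_simps)
    also have "\<dots> = (\<Sum>r<n. (y u * c r + p * B r u) * (x v * c r + p * A r v))"
      by (rule sum.cong, auto simp: aX aY u v)
    finally show ?thesis unfolding expand_sum C_def s_def t_def by (simp add: ac_simps)
  qed
  have pC: "p dvd C"
  proof -
    have "p dvd a * a * (transpose_mat X * X) $$ (v0,v0)"
      by (rule dvd_mult, rule dvd_trans[OF _ XX[OF v0(1) v0(1)]], simp)
    then have "p dvd x v0 * x v0 * C" unfolding exX[OF v0(1) v0(1)]
      by (simp add: dvd_add_left_iff power2_eq_square)
    then show ?thesis using v0(2) p by (simp add: prime_dvd_mult_iff)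
  qed
  then obtain g where g: "C = p * g" by blast
  have KX: "p dvd g * x w * x v + x w * s v + x v * s w" if "w < n" "v < n" for w v
  proof -
    have "p^2 dvd a * a * (transpose_mat X * X) $$ (w,v)" by (rule dvd_mult, rule XX[OF that])
    then have "p * p dvd p * (g * x w * x v + x w * s v + x v * s w) + p * p * (\<Sum>r<n. A r w * A r v)"
      unfolding exX[OF that] g by (simp add: algebra_simps power2_eq_square)
    then have "p * p dvd p * (g * x w * x v + x w * s v + x v * s w)"
      by (simp add: dvd_add_left_iff)
    then show ?thesis using p0 by simp
  qed
  have KY: "p dvd g * y w * y v + y w * t v + y v * t w" if "w < n" "v < n" for w v
  proof -
    have "p^2 dvd a * a * (transpose_mat Y * Y) $$ (w,v)" by (rule dvd_mult, rule YY[OF that])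
    then have "p * p dvd p * (g * y w * y v + y w * t v + y v * t w) + p * p * (\<Sum>r<n. B r w * B r v)"
      unfolding exY[OF that] g by (simp add: algebra_simps power2_eq_square)
    then have "p * p dvd p * (g * y w * y v + y w * t v + y v * t w)"
      by (simp add: dvd_add_left_iff)
    then show ?thesis using p0 by simp
  qed
  have odd: "\<not> p dvd 2" using p p2 zdvd_imp_le[of p 2] prime_ge_2_int[of p] by force
  have UX: "p dvd g * x v + 2 * s v" if "v < n" for v
  proof -
    have d0: "p dvd x v0 * (g * x v0 + 2 * s v0)" using KX[OF v0(1) v0(1)] by (simp add: algebra_simps)
    then have d0': "p dvd g * x v0 + 2 * s v0" using v0(2) p by (simp add: prime_dvd_mult_iff)
    have "p dvd 2 * (g * x v0 * x v + x v0 * s v + x v * s v0) - x v * (g * x v0 + 2 * s v0)"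
      using KX[OF v0(1) that] d0' by (intro dvd_diff dvd_mult2 dvd_mult) 
    also have "2 * (g * x v0 * x v + x v0 * s v + x v * s v0) - x v * (g * x v0 + 2 * s v0) = x v0 * (g * x v + 2 * s v)"
      by (simp add: algebra_simps)
    finally show ?thesis using v0(2) p by (simp add: prime_dvd_mult_iff)
  qed
  have UY: "p dvd g * y v + 2 * t v" if "v < n" for v
  proof -
    have d0: "p dvd y u0 * (g * y u0 + 2 * t u0)" using KY[OF u0(1) u0(1)] by (simp add: algebra_simps)
    then have d0': "p dvd g * y u0 + 2 * t u0" using u0(2) p by (simp add: prime_dvd_mult_iff)
    have "p dvd 2 * (g * y u0 * y v + y u0 * t v + y v * t u0) - y v * (g * y u0 + 2 * t u0)"
      using KY[OF u0(1) that] d0' by (intro dvd_diff dvd_mult2 dvd_mult) 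
    also have "2 * (g * y u0 * y v + y u0 * t v + y v * t u0) - y v * (g * y u0 + 2 * t u0) = y u0 * (g * y v + 2 * t v)"
      by (simp add: algebra_simps)
    finally show ?thesis using u0(2) p by (simp add: prime_dvd_mult_iff)
  qed
  have "p dvd y u * (g * x v + 2 * s v) + x v * (g * y u + 2 * t u)"
    using dvd_mult[OF UX[OF v], of "y u"] dvd_mult[OF UY[OF u], of "x v"] by (rule dvd_add)
  also have "y u * (g * x v + 2 * s v) + x v * (g * y u + 2 * t u) = 2 * (g * y u * x v + y u * s v + x v * t u)"
    by (simp add: algebra_simps)
  finally have h2: "p dvd 2 * (g * y u * x v + y u * s v + x v * t u)" .
  have "p dvd g * y u * x v + y u * s v + x v * t u" 
    using prime_dvd_mult_iff[OF p, of 2 "g * y u * x v + y u * s v + x v * t u"] h2 odd by blast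
  then have K: "p * p dvd p * (g * y u * x v + y u * s v + x v * t u)" by (rule mult_dvd_mono[OF dvd_refl])
  have e: "a * a * (transpose_mat Y * X) $$ (u,v) = p * (g * y u * x v + y u * s v + x v * t u) + p^2 * (\<Sum>r<n. B r u * A r v)"
    unfolding exYX g by (simp add: algebra_simps)
  have "p^2 dvd a * a * (transpose_mat Y * X) $$ (u,v)"
    unfolding e using K by (intro dvd_add) (auto simp: power2_eq_square)
  then show ?thesis using pna p
    by (metis prime_dvd_mult_iff coprime_commute prime_imp_coprime coprime_power_left_iff coprime_dvd_mult_right_iff mult.assoc)
qed



definition toI :: "rat mat \<Rightarrow> int mat" where "toI A = map_mat (\<lambda>x. \<lfloor>x\<rfloor>) A"

lemma toI: assumes A: "A \<in> carrier_mat n n" and I: "\<And>i j. i < n \<Longrightarrow> j < n \<Longrightarrow> A $$ (i,j) \<in> \<int>"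
  shows "map_mat of_int (toI A) = A" "toI A \<in> carrier_mat n n"
proof -
  show "map_mat of_int (toI A) = A"
    by (rule eq_matI, insert A I, auto simp: toI_def elim!: Ints_cases)
  show "toI A \<in> carrier_mat n n" using A unfolding toI_def by simp
qed

lemma adj_hom: fixes A :: "int mat" assumes A: "A \<in> carrier_mat n n"
  shows "adj_mat (map_mat (of_int :: int \<Rightarrow> rat) A) = map_mat of_int (adj_mat A)"
proof (rule eq_matI)
  fix i j assume ij: "i < dim_row (map_mat of_int (adj_mat A) :: rat mat)" "j < dim_col (map_mat of_int (adj_mat A) :: rat mat)"
  then have ij': "i < n" "j < n" using adj_mat(1)[OF A] by auto
  have del: "mat_delete (map_mat (of_int :: int \<Rightarrow> rat) A) j i = map_mat of_int (mat_delete A j i)"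
    by (rule eq_matI, insert A, auto simp: mat_delete_def)
  have "adj_mat (map_mat (of_int :: int \<Rightarrow> rat) A) $$ (i,j) = cofactor (map_mat (of_int :: int \<Rightarrow> rat) A) j i"
    using ij' A unfolding adj_mat_def by simp
  also have "\<dots> = of_int (cofactor A j i)" unfolding cofactor_def del of_int_hom.hom_det by simp
  also have "\<dots> = map_mat of_int (adj_mat A) $$ (i,j)" using ij' A unfolding adj_mat_def by simp
  finally show "adj_mat (map_mat (of_int :: int \<Rightarrow> rat) A) $$ (i,j) = map_mat of_int (adj_mat A) $$ (i,j)" .
qed (insert A, auto simp: adj_mat_def)

lemma walk_dim[simp]: "dim_row (walk_mat n arc) = n" "dim_col (walk_mat n arc) = n"
  using walk_carrier[of n arc] unfolding carrier_mat_def by auto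

lemma skew_adj_dim[simp]: "dim_row (skew_adj n arc) = n" "dim_col (skew_adj n arc) = n"
  unfolding skew_adj_def by auto

lemma walk_transport:
  assumes Q: "Q \<in> carrier_mat n n" and QtQ: "transpose_mat Q * Q = 1\<^sub>m n"
    and Qe: "Q *\<^sub>v ones_vec n = ones_vec n"
    and conj: "transpose_mat Q * skew_adj n a1 * Q = skew_adj n a2"
  shows "transpose_mat Q * walk_mat n a1 = walk_mat n a2"
proof -
  define Qt where "Qt = transpose_mat Q"
  define S1 where "S1 = skew_adj n a1"
  define S2 where "S2 = skew_adj n a2"
  have Qt: "Qt \<in> carrier_mat n n" unfolding Qt_def using Q by simp
  have S1: "S1 \<in> carrier_mat n n" and S2: "S2 \<in> carrier_mat n n" unfolding S1_def S2_def by auto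
  have QQt: "Q * Qt = 1\<^sub>m n" using mat_mult_left_right_inverse[OF Qt Q QtQ[folded Qt_def]] .
  have comm: "Qt * S1 = S2 * Qt"
  proof -
    have "S2 * Qt = (Qt * S1 * Q) * Qt" using conj unfolding Qt_def S1_def S2_def by simp
    also have "\<dots> = Qt * S1 * (Q * Qt)" using Qt S1 Q by (simp add: assoc_mult_mat[of _ n n _ n _ n])
    also have "\<dots> = Qt * S1" unfolding QQt using Qt S1 by simp
    finally show ?thesis by simp
  qed
  have pow: "Qt * S1 ^\<^sub>m k = S2 ^\<^sub>m k * Qt" for k
  proof (induction k)
    case 0 then show ?case using Qt S1 S2 by simp
  next
    case (Suc k)
    have "Qt * S1 ^\<^sub>m Suc k = (Qt * S1 ^\<^sub>m k) * S1" using Qt S1 by (simp add: assoc_mult_mat[of _ n n _ n _ n])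
    also have "\<dots> = S2 ^\<^sub>m k * (Qt * S1)" unfolding Suc using Qt S1 S2 by (simp add: assoc_mult_mat[of _ n n _ n _ n])
    also have "\<dots> = S2 ^\<^sub>m Suc k * Qt" unfolding comm using Qt S1 S2 by (simp add: assoc_mult_mat[of _ n n _ n _ n])
    finally show ?case .
  qed
  have Qte: "Qt *\<^sub>v ones_vec n = ones_vec n"
  proof -
    have "Qt *\<^sub>v ones_vec n = Qt *\<^sub>v (Q *\<^sub>v ones_vec n)" unfolding Qe ..
    also have "\<dots> = (Qt * Q) *\<^sub>v ones_vec n" using assoc_mult_mat_vec[OF Qt Q ones_vec_carrier] by simp
    also have "\<dots> = ones_vec n" unfolding Qt_def QtQ by simp
    finally show ?thesis .
  qed
  have vec: "Qt *\<^sub>v (S1 ^\<^sub>m k *\<^sub>v ones_vec n) = S2 ^\<^sub>m k *\<^sub>v ones_vec n" for k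
  proof -
    have "Qt *\<^sub>v (S1 ^\<^sub>m k *\<^sub>v ones_vec n) = (Qt * S1 ^\<^sub>m k) *\<^sub>v ones_vec n" 
      using assoc_mult_mat_vec[OF Qt pow_carrier_mat[OF S1] ones_vec_carrier] by simp
    also have "\<dots> = S2 ^\<^sub>m k *\<^sub>v (Qt *\<^sub>v ones_vec n)" unfolding pow 
      using assoc_mult_mat_vec[OF pow_carrier_mat[OF S2] Qt ones_vec_carrier] by simp
    finally show ?thesis unfolding Qte .
  qed
  show ?thesis
  proof (rule eq_matI)
    fix i j assume "i < dim_row (walk_mat n a2)" "j < dim_col (walk_mat n a2)"
    then have ij: "i < n" "j < n" by auto
    have v: "S1 ^\<^sub>m j *\<^sub>v ones_vec n \<in> carrier_vec n"
      by (rule mult_mat_vec_carrier[OF pow_carrier_mat[OF S1] ones_vec_carrier])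
    have "(Qt * walk_mat n a1) $$ (i,j) = (\<Sum>l<n. Qt $$ (i,l) * walk_mat n a1 $$ (l,j))"
      by (rule mult_entry[OF Qt walk_carrier ij])
    also have "\<dots> = (\<Sum>l<n. Qt $$ (i,l) * (S1 ^\<^sub>m j *\<^sub>v ones_vec n) $ l)"
      by (rule sum.cong, auto simp: walk_entry ij S1_def)
    also have "\<dots> = (Qt *\<^sub>v (S1 ^\<^sub>m j *\<^sub>v ones_vec n)) $ i" by (rule mat_vec_entry[OF Qt v ij(1), symmetric])
    also have "\<dots> = walk_mat n a2 $$ (i,j)" unfolding vec walk_entry[OF ij] S2_def ..
    finally show "(transpose_mat Q * walk_mat n a1) $$ (i,j) = walk_mat n a2 $$ (i,j)" unfolding Qt_def .
  qed (insert Q, auto)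
qed



lemma level_dvd_det:
  assumes Q: "Q \<in> carrier_mat n n" and T: "transpose_mat Q * map_mat of_int I1 = map_mat of_int I2"
    and I1: "I1 \<in> carrier_mat n n" and I2: "I2 \<in> carrier_mat n n" and d: "det I1 = m" and m: "m \<noteq> 0"
  shows "level Q dvd nat \<bar>m\<bar>"
proof -
  define W1 :: "rat mat" where "W1 = map_mat of_int I1"
  define W2 :: "rat mat" where "W2 = map_mat of_int I2"
  have W1: "W1 \<in> carrier_mat n n" and W2: "W2 \<in> carrier_mat n n" unfolding W1_def W2_def using I1 I2 by auto
  have Qt: "transpose_mat Q \<in> carrier_mat n n" using Q by simp
  have A1: "adj_mat W1 \<in> carrier_mat n n" using adj_mat(1)[OF W1] .
  have dW1: "det W1 = of_int m" unfolding W1_def of_int_hom.hom_det d ..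
  have "W2 * adj_mat W1 = (transpose_mat Q * W1) * adj_mat W1" using T unfolding W1_def W2_def by simp
  also have "\<dots> = transpose_mat Q * (W1 * adj_mat W1)" using Qt W1 A1 by simp
  also have "\<dots> = transpose_mat Q * (of_int m \<cdot>\<^sub>m 1\<^sub>m n)" unfolding adj_mat(2)[OF W1] dW1 ..
  also have "\<dots> = of_int m \<cdot>\<^sub>m transpose_mat Q" using mult_smult_distrib[OF Qt one_carrier_mat[of n]] Qt by simp
  finally have e1: "W2 * adj_mat W1 = of_int m \<cdot>\<^sub>m transpose_mat Q" .
  have "W2 * adj_mat W1 = map_mat of_int I2 * map_mat of_int (adj_mat I1)"
    unfolding W1_def W2_def adj_hom[OF I1] ..
  also have "\<dots> = map_mat of_int (I2 * adj_mat I1)" 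
    by (rule of_int_hom.mat_hom_mult[symmetric, OF I2 adj_mat(1)[OF I1]])
  finally have "W2 * adj_mat W1 = map_mat of_int (I2 * adj_mat I1)" .
  then have e2: "of_int m \<cdot>\<^sub>m transpose_mat Q = map_mat of_int (I2 * adj_mat I1)" unfolding e1 .
  have int: "of_int m * Q $$ (i,j) \<in> \<int>" if "i < n" "j < n" for i j
  proof -
    have a: "(of_int m \<cdot>\<^sub>m transpose_mat Q) $$ (j,i) = of_int m * Q $$ (i,j)" using that Q by simp
    have b: "(of_int m \<cdot>\<^sub>m transpose_mat Q) $$ (j,i) = of_int ((I2 * adj_mat I1) $$ (j,i))"
      unfolding e2 using that I2 adj_mat(1)[OF I1] by simp
    from a b show ?thesis by (metis Ints_of_int)
  qed
  have "integral_mat (of_nat (nat \<bar>m\<bar>) \<cdot>\<^sub>m Q)" unfolding integral_mat_smult_iff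
  proof (intro allI impI)
    fix i j assume "i < dim_row Q" "j < dim_col Q"
    then have ij: "i < n" "j < n" using Q by auto
    have "(of_nat (nat \<bar>m\<bar>) :: rat) = (if m \<ge> 0 then of_int m else - of_int m)" by auto
    then show "of_nat (nat \<bar>m\<bar>) * Q $$ (i,j) \<in> \<int>" using int[OF ij] by (cases "m \<ge> 0") auto
  qed
  then show ?thesis by (rule level_dvd[rotated], insert m, simp)
qed

lemma X_facts:
  assumes Q: "Q \<in> carrier_mat n n" and QtQ: "transpose_mat Q * Q = 1\<^sub>m n"
    and T: "transpose_mat Q * map_mat of_int I1 = map_mat of_int I2"
    and I1: "I1 \<in> carrier_mat n n" and I2: "I2 \<in> carrier_mat n n" 
    and p: "prime (p::int)" and pl: "p dvd int (level Q)"
  shows "toI (of_nat (level Q) \<cdot>\<^sub>m Q) \<in> carrier_mat n n" 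
    "map_mat of_int (toI (of_nat (level Q) \<cdot>\<^sub>m Q)) = of_nat (level Q) \<cdot>\<^sub>m Q"
    "\<And>i j. i < n \<Longrightarrow> j < n \<Longrightarrow> p dvd (transpose_mat I1 * toI (of_nat (level Q) \<cdot>\<^sub>m Q)) $$ (i,j)"
    "\<And>i j. i < n \<Longrightarrow> j < n \<Longrightarrow> p^2 dvd (transpose_mat (toI (of_nat (level Q) \<cdot>\<^sub>m Q)) * toI (of_nat (level Q) \<cdot>\<^sub>m Q)) $$ (i,j)"
    "\<exists>i<n. \<exists>j<n. \<not> p dvd toI (of_nat (level Q) \<cdot>\<^sub>m Q) $$ (i,j)"
proof -
  define l where "l = level Q"
  define X where "X = toI (of_nat l \<cdot>\<^sub>m Q)"
  have lQ: "of_nat l \<cdot>\<^sub>m Q \<in> carrier_mat n n" using Q by simp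
  have lI: "(of_nat l \<cdot>\<^sub>m Q) $$ (i,j) \<in> \<int>" if "i < n" "j < n" for i j
    using level_integral[of Q] that Q unfolding l_def integral_mat_def by auto
  have X: "X \<in> carrier_mat n n" and XQ: "map_mat of_int X = of_nat l \<cdot>\<^sub>m Q"
    unfolding X_def using toI[OF lQ lI] by auto
  have Xe: "of_int (X $$ (i,j)) = of_nat l * Q $$ (i,j)" if "i < n" "j < n" for i j
  proof -
    have "map_mat of_int X $$ (i,j) = (of_nat l \<cdot>\<^sub>m Q) $$ (i,j)" unfolding XQ ..
    then show ?thesis using that X Q by simp
  qed
  show "toI (of_nat (level Q) \<cdot>\<^sub>m Q) \<in> carrier_mat n n" using X unfolding X_def l_def .
  show "map_mat of_int (toI (of_nat (level Q) \<cdot>\<^sub>m Q)) = of_nat (level Q) \<cdot>\<^sub>m Q" using XQ unfolding X_def l_def .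
  have Tentry: "(\<Sum>r<n. Q $$ (r,j) * of_int (I1 $$ (r,i))) = of_int (I2 $$ (j,i))" if "i < n" "j < n" for i j
  proof -
    have "(transpose_mat Q * map_mat of_int I1) $$ (j,i) = (\<Sum>r<n. transpose_mat Q $$ (j,r) * map_mat of_int I1 $$ (r,i))"
      by (rule mult_entry[of _ n n _ n], insert Q I1 that, auto)
    also have "\<dots> = (\<Sum>r<n. Q $$ (r,j) * of_int (I1 $$ (r,i)))" by (rule sum.cong, insert Q I1 that, auto)
    finally show ?thesis unfolding T using I2 that by simp
  qed
  show "p dvd (transpose_mat I1 * toI (of_nat (level Q) \<cdot>\<^sub>m Q)) $$ (i,j)" if ij: "i < n" "j < n" for i j
  proof -
    have "of_int ((transpose_mat I1 * X) $$ (i,j)) = (of_int (\<Sum>r<n. I1 $$ (r,i) * X $$ (r,j)) :: rat)"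
      unfolding tmult_entry[OF I1 X ij] ..
    also have "\<dots> = of_nat l * (\<Sum>r<n. Q $$ (r,j) * of_int (I1 $$ (r,i)))"
      by (simp add: sum_distrib_left Xe ij ac_simps)
    also have "\<dots> = of_int (int l * I2 $$ (j,i))" unfolding Tentry[OF ij] by simp
    finally have "(transpose_mat I1 * X) $$ (i,j) = int l * I2 $$ (j,i)" by (simp only: of_int_eq_iff)
    then show ?thesis using pl unfolding X_def l_def by simp
  qed
  show "p^2 dvd (transpose_mat (toI (of_nat (level Q) \<cdot>\<^sub>m Q)) * toI (of_nat (level Q) \<cdot>\<^sub>m Q)) $$ (i,j)" 
    if ij: "i < n" "j < n" for i j
  proof -
    have QQ: "(\<Sum>r<n. Q $$ (r,i) * Q $$ (r,j)) = (if i = j then 1 else 0)"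
    proof -
      have "(transpose_mat Q * Q) $$ (i,j) = (\<Sum>r<n. Q $$ (r,i) * Q $$ (r,j))"
        using mult_entry[of "transpose_mat Q" n n Q n i j] Q ij by simp
      then show ?thesis unfolding QtQ using ij by simp
    qed
    have "of_int ((transpose_mat X * X) $$ (i,j)) = (of_int (\<Sum>r<n. X $$ (r,i) * X $$ (r,j)) :: rat)"
      unfolding tmult_entry[OF X X ij] ..
    also have "\<dots> = of_nat l * of_nat l * (\<Sum>r<n. Q $$ (r,i) * Q $$ (r,j))"
      by (simp add: sum_distrib_left Xe ij ac_simps)
    also have "\<dots> = of_int (int l * int l * (if i = j then 1 else 0))" unfolding QQ by simp
    finally have "(transpose_mat X * X) $$ (i,j) = int l * int l * (if i = j then 1 else 0)" by (simp only: of_int_eq_iff)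
    moreover have "p^2 dvd int l * int l" using mult_dvd_mono[OF pl pl] unfolding l_def power2_eq_square .
    ultimately show ?thesis unfolding X_def l_def by simp
  qed
  show "\<exists>i<n. \<exists>j<n. \<not> p dvd toI (of_nat (level Q) \<cdot>\<^sub>m Q) $$ (i,j)"
  proof (rule ccontr)
    assume "\<not> ?thesis"
    then have all: "p dvd X $$ (i,j)" if "i < n" "j < n" for i j using that unfolding X_def l_def by auto
    have p2: "p \<ge> 2" using p prime_ge_2_int by auto
    have lpos: "l > 0" unfolding l_def by (rule level_pos)
    obtain k where k: "int l = p * k" using pl unfolding l_def by blast
    have kpos: "k > 0" using k lpos p2 by (smt (verit) mult_le_0_iff of_nat_0_less_iff)
    have IK: "integral_mat (of_nat (nat k) \<cdot>\<^sub>m Q)" unfolding integral_mat_smult_iff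
    proof (intro allI impI)
      fix i j assume "i < dim_row Q" "j < dim_col Q"
      then have ij: "i < n" "j < n" using Q by auto
      obtain z where z: "X $$ (i,j) = p * z" using all[OF ij] by blast
      have "of_int p * (of_int k * Q $$ (i,j)) = (of_int p * of_int z :: rat)"
      proof -
        have lk: "(of_nat l :: rat) = of_int p * of_int k" by (metis k of_int_mult of_int_of_nat_eq)
        have "of_int (X $$ (i,j)) = (of_nat l * Q $$ (i,j) :: rat)" by (rule Xe[OF ij])
        then show ?thesis unfolding z lk by (auto simp: ac_simps)
      qed
      then have kz: "of_int k * Q $$ (i,j) = (of_int z :: rat)" using p2 by simp
      have kk: "(of_nat (nat k)::rat) = of_int k" using kpos by simp
      show "of_nat (nat k) * Q $$ (i,j) \<in> \<int>" unfolding kk kz by simp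
    qed
    have "level Q \<le> nat k" by (rule level_le[OF _ IK]) (use kpos in simp)
    moreover have "2 * k \<le> p * k" using p2 kpos by (simp add: mult_right_mono)
    then have "k < int l" using k kpos by linarith
    ultimately show False unfolding l_def using kpos le_nat_iff[of k "level Q"] by linarith
  qed
qed

lemma sqf_sq_dvd: fixes a :: nat and b :: int 
  assumes "squarefree a" "\<And>p. prime p \<Longrightarrow> p dvd a \<Longrightarrow> (int p)^2 dvd b"
  shows "(int a)^2 dvd b"
  using assms
proof (induction a rule: less_induct)
  case (less a)
  show ?case
  proof (cases "a = 1")
    case True then show ?thesis by simp
  next
    case False
    have a0: "a \<noteq> 0"
    proof
      assume "a = 0"
      then have "(2::nat)^2 dvd a" by simp
      from squarefreeD[OF less.prems(1) this] show False by simp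
    qed
    obtain p where p: "prime p" "p dvd a" using False prime_factor_nat by blast
    then obtain a' where a: "a = p * a'" by blast
    have np: "\<not> p dvd a'"
    proof
      assume "p dvd a'"
      then have "p^2 dvd a" unfolding a power2_eq_square by simp
      from squarefreeD[OF less.prems(1) this] p(1) show False by auto
    qed
    have lt: "a' < a" using a a0 p(1) prime_gt_1_nat by (metis mult_less_cancel2 nat_mult_1 neq0_conv mult.commute) 
    have sa: "squarefree a'" using squarefree_mono[OF _ less.prems(1)] a by simp
    have IH: "(int a')^2 dvd b" using less.IH[OF lt sa] less.prems(2) a by auto
    have P: "(int p)^2 dvd b" using less.prems(2)[OF p] .
    have "coprime p a'" using p(1) np by (simp add: prime_imp_coprime)
    then have "coprime ((int p)^2) ((int a')^2)" by simp
    from divides_mult[OF P IH this] show ?thesis unfolding a by (simp add: power_mult_distrib)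
  qed
qed

lemma sk_cospectral: assumes "char_poly (skew_adj n A) = char_poly (skew_adj n B)"
  shows "char_poly (sk n A) = char_poly (sk n B)"
proof -
  have "map_poly (of_int :: int \<Rightarrow> rat) (char_poly (sk n A)) = map_poly of_int (char_poly (sk n B))"
    using assms unfolding skew_adj_sk of_int_hom.char_poly_hom[OF sk_carrier] .
  then show ?thesis
    by (metis of_int_hom.injectivity poly_eqI coeff_map_poly of_int_0)
qed



lemma sqf_nat_abs: fixes m :: int assumes "squarefree m" shows "squarefree (nat \<bar>m\<bar>)"
proof (rule squarefreeI)
  fix x :: nat assume "x^2 dvd nat \<bar>m\<bar>"
  then have "int (x^2) dvd int (nat \<bar>m\<bar>)" by (rule int_dvd_int_iff[THEN iffD2])
  then have "(int x)^2 dvd m" by simp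
  from squarefreeD[OF assms this] have "int x dvd 1" .
  then show "x dvd 1" by simp
qed

theorem lemma4p2:
  fixes n :: nat and \<Sigma> \<Delta> \<Gamma> :: "nat \<Rightarrow> nat \<Rightarrow> bool" and Q Q\<^sub>1 :: "rat mat"
  assumes "in_G n \<Sigma>" and "in_G n \<Delta>" and "in_G n \<Gamma>"
    and "gen_cospectral n \<Sigma> \<Delta>" and "gen_cospectral n \<Sigma> \<Gamma>" and "gen_cospectral n \<Delta> \<Gamma>"
    and "Q \<in> Qset n \<Sigma>" and "Q\<^sub>1 \<in> Qset n \<Sigma>"
    and "transpose_mat Q * skew_adj n \<Sigma> * Q = skew_adj n \<Delta>"
    and "transpose_mat Q\<^sub>1 * skew_adj n \<Sigma> * Q\<^sub>1 = skew_adj n \<Gamma>"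
    and "level Q\<^sub>1 dvd level Q"
  shows "transpose_mat (transpose_mat Q\<^sub>1 * Q) * skew_adj n \<Gamma> * (transpose_mat Q\<^sub>1 * Q) = skew_adj n \<Delta>
    \<and> level (transpose_mat Q\<^sub>1 * Q) = level Q div level Q\<^sub>1"
proof -
  have Qr: "regular_rat_orth n Q" using assms(7) unfolding Qset_def by auto
  then have Q: "Q \<in> carrier_mat n n" and QtQ: "transpose_mat Q * Q = 1\<^sub>m n" 
    and Qe: "Q *\<^sub>v ones_vec n = ones_vec n" unfolding regular_rat_orth_def by auto
  have Q1r: "regular_rat_orth n Q\<^sub>1" using assms(8) unfolding Qset_def by auto
  then have Q1: "Q\<^sub>1 \<in> carrier_mat n n" and Q1tQ1: "transpose_mat Q\<^sub>1 * Q\<^sub>1 = 1\<^sub>m n" 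
    and Q1e: "Q\<^sub>1 *\<^sub>v ones_vec n = ones_vec n" unfolding regular_rat_orth_def by auto
  have Qt: "transpose_mat Q \<in> carrier_mat n n" and Q1t: "transpose_mat Q\<^sub>1 \<in> carrier_mat n n" using Q Q1 by auto
  have Q1Q1t: "Q\<^sub>1 * transpose_mat Q\<^sub>1 = 1\<^sub>m n" by (rule mat_mult_left_right_inverse[OF Q1t Q1 Q1tQ1])
  define Q2 where "Q2 = transpose_mat Q\<^sub>1 * Q"
  have Q2: "Q2 \<in> carrier_mat n n" unfolding Q2_def using Q1t Q by simp
  define S where "S = skew_adj n \<Sigma>"
  define SD where "SD = skew_adj n \<Delta>"
  define SG where "SG = skew_adj n \<Gamma>"
  have S: "S \<in> carrier_mat n n" and SD: "SD \<in> carrier_mat n n" and SG: "SG \<in> carrier_mat n n"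
    unfolding S_def SD_def SG_def by auto
  have conj1: "transpose_mat Q2 * SG * Q2 = SD"
  proof -
    have Q2t: "transpose_mat Q2 = transpose_mat Q * Q\<^sub>1" unfolding Q2_def
      using transpose_mult[OF Q1t Q] by simp
    have "Q\<^sub>1 * SG * transpose_mat Q\<^sub>1 = Q\<^sub>1 * (transpose_mat Q\<^sub>1 * S * Q\<^sub>1) * transpose_mat Q\<^sub>1"
      using assms(10) unfolding S_def SG_def by simp
    also have "\<dots> = (Q\<^sub>1 * transpose_mat Q\<^sub>1) * S * (Q\<^sub>1 * transpose_mat Q\<^sub>1)"
      using Q1 Q1t S by (simp add: assoc_mult_mat[of _ n n _ n _ n])
    also have "\<dots> = S" unfolding Q1Q1t using S by simp
    finally have e: "Q\<^sub>1 * SG * transpose_mat Q\<^sub>1 = S" .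
    have "transpose_mat Q2 * SG * Q2 = transpose_mat Q * (Q\<^sub>1 * SG * transpose_mat Q\<^sub>1) * Q"
      unfolding Q2t unfolding Q2_def using Q Qt Q1 Q1t SG by (simp add: assoc_mult_mat[of _ n n _ n _ n])
    also have "\<dots> = SD" unfolding e using assms(9) unfolding S_def SD_def .
    finally show ?thesis .
  qed
  have ogS: "oriented_graph n \<Sigma>" and ogD: "oriented_graph n \<Delta>" and ogG: "oriented_graph n \<Gamma>"
    using assms(1-3) unfolding in_G_def by auto
  define f where "f = char_poly (sk n \<Sigma>)"
  have fD: "char_poly (sk n \<Delta>) = f" unfolding f_def 
    by (rule sk_cospectral[symmetric], insert assms(4), auto simp: gen_cospectral_def)
  have fG: "char_poly (sk n \<Gamma>) = f" unfolding f_def 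
    by (rule sk_cospectral[symmetric], insert assms(5), auto simp: gen_cospectral_def)
  define W where "W = Wp n \<Sigma> f"
  define WD where "WD = Wp n \<Delta> f"
  define WG where "WG = Wp n \<Gamma> f"
  have TD: "transpose_mat Q * W = WD"
  proof -
    have "transpose_mat Q * W = (transpose_mat Q * walk_mat n \<Sigma>) * Um n f * Dm n"
    proof -
      have a: "transpose_mat Q * (walk_mat n \<Sigma> * Um n f * Dm n) = (transpose_mat Q * (walk_mat n \<Sigma> * Um n f)) * Dm n"
        by (rule assoc_mult_mat[symmetric, of _ n n _ n _ n]) (use Qt in auto)
      have b: "transpose_mat Q * (walk_mat n \<Sigma> * Um n f) = transpose_mat Q * walk_mat n \<Sigma> * Um n f"
        by (rule assoc_mult_mat[symmetric, of _ n n _ n _ n]) (use Qt in auto)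
      show ?thesis unfolding W_def Wp_def a b ..
    qed
    also have "transpose_mat Q * walk_mat n \<Sigma> = walk_mat n \<Delta>" by (rule walk_transport[OF Q QtQ Qe assms(9)])
    finally show ?thesis unfolding WD_def Wp_def .
  qed
  have TG: "transpose_mat Q\<^sub>1 * W = WG"
  proof -
    have "transpose_mat Q\<^sub>1 * W = (transpose_mat Q\<^sub>1 * walk_mat n \<Sigma>) * Um n f * Dm n"
    proof -
      have a: "transpose_mat Q\<^sub>1 * (walk_mat n \<Sigma> * Um n f * Dm n) = (transpose_mat Q\<^sub>1 * (walk_mat n \<Sigma> * Um n f)) * Dm n"
        by (rule assoc_mult_mat[symmetric, of _ n n _ n _ n]) (use Q1t in auto)
      have b: "transpose_mat Q\<^sub>1 * (walk_mat n \<Sigma> * Um n f) = transpose_mat Q\<^sub>1 * walk_mat n \<Sigma> * Um n f"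
        by (rule assoc_mult_mat[symmetric, of _ n n _ n _ n]) (use Q1t in auto)
      show ?thesis unfolding W_def Wp_def a b ..
    qed
    also have "transpose_mat Q\<^sub>1 * walk_mat n \<Sigma> = walk_mat n \<Gamma>" by (rule walk_transport[OF Q1 Q1tQ1 Q1e assms(10)])
    finally show ?thesis unfolding WG_def Wp_def .
  qed
  have IW: "W $$ (i,j) \<in> \<int>" if "i < n" "j < n" for i j
    unfolding W_def by (rule Wp_integral_entry[OF ogS f_def that])
  have IWD: "WD $$ (i,j) \<in> \<int>" if "i < n" "j < n" for i j
    unfolding WD_def by (rule Wp_integral_entry[OF ogD fD[symmetric] that])
  have IWG: "WG $$ (i,j) \<in> \<int>" if "i < n" "j < n" for i j
    unfolding WG_def by (rule Wp_integral_entry[OF ogG fG[symmetric] that])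
  define IS where "IS = toI W"
  define ID where "ID = toI WD"
  define IG where "IG = toI WG"
  have Wc: "W \<in> carrier_mat n n" "WD \<in> carrier_mat n n" "WG \<in> carrier_mat n n" unfolding W_def WD_def WG_def by auto
  have IS: "IS \<in> carrier_mat n n" "map_mat of_int IS = W" unfolding IS_def using toI[OF Wc(1) IW] by auto
  have ID: "ID \<in> carrier_mat n n" "map_mat of_int ID = WD" unfolding ID_def using toI[OF Wc(2) IWD] by auto
  have IG: "IG \<in> carrier_mat n n" "map_mat of_int IG = WG" unfolding IG_def using toI[OF Wc(3) IWG] by auto
  obtain m :: int where dwalk: "det (walk_mat n \<Sigma>) = 2 ^ (n div 2) * of_int m" and modd: "odd m" and msq: "squarefree m"
    using assms(1) unfolding in_G_def by auto
  have "det W = of_int m" unfolding W_def det_Wp[OF char_poly_sk_top[of n \<Sigma>, folded f_def]] dwalk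
    by (simp add: power_one_over)
  then have dIS: "det IS = m" using IS(2) of_int_hom.hom_det[of IS] by (metis of_int_eq_iff)
  have m0: "m \<noteq> 0" using modd by auto
  have TD': "transpose_mat Q * map_mat of_int IS = map_mat of_int ID" using TD IS ID by simp
  have TG': "transpose_mat Q\<^sub>1 * map_mat of_int IS = map_mat of_int IG" using TG IS IG by simp
  define l where "l = level Q"
  define l1 where "l1 = level Q\<^sub>1"
  have lpos: "l > 0" and l1pos: "l1 > 0" unfolding l_def l1_def by (auto intro: level_pos)
  have hl: "l dvd nat \<bar>m\<bar>" unfolding l_def by (rule level_dvd_det[OF Q TD' IS(1) ID(1) dIS m0])
  have hl1: "l1 dvd nat \<bar>m\<bar>" unfolding l1_def by (rule level_dvd_det[OF Q1 TG' IS(1) IG(1) dIS m0])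
  have sqm: "squarefree (nat \<bar>m\<bar>)" by (rule sqf_nat_abs[OF msq])
  have sq1: "squarefree l1" by (rule squarefree_mono[OF hl1 sqm])
  have l1l: "l1 dvd l" using assms(11) unfolding l_def l1_def .
  define q where "q = l div l1"
  have lq: "l = l1 * q" unfolding q_def using l1l by simp
  have qpos: "q > 0" using lq lpos by (cases q) auto
  define X where "X = toI (of_nat l \<cdot>\<^sub>m Q)"
  define Y where "Y = toI (of_nat l1 \<cdot>\<^sub>m Q\<^sub>1)"
  have X: "X \<in> carrier_mat n n" and Y: "Y \<in> carrier_mat n n" 
    unfolding X_def Y_def toI_def using Q Q1 by auto
  have XQ: "map_mat of_int X = of_nat l \<cdot>\<^sub>m Q" 
    unfolding X_def l_def by (rule eq_matI, insert Q level_integral[of Q], auto simp: toI_def integral_mat_def elim!: Ints_cases)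
  have YQ: "map_mat of_int Y = of_nat l1 \<cdot>\<^sub>m Q\<^sub>1" 
    unfolding Y_def l1_def by (rule eq_matI, insert Q1 level_integral[of Q\<^sub>1], auto simp: toI_def integral_mat_def elim!: Ints_cases)
  have Xe: "of_int (X $$ (i,j)) = of_nat l * Q $$ (i,j)" if "i < n" "j < n" for i j
  proof -
    have "map_mat of_int X $$ (i,j) = (of_nat l \<cdot>\<^sub>m Q) $$ (i,j)" unfolding XQ ..
    then show ?thesis using that X Q by simp
  qed
  have Ye: "of_int (Y $$ (i,j)) = of_nat l1 * Q\<^sub>1 $$ (i,j)" if "i < n" "j < n" for i j
  proof -
    have "map_mat of_int Y $$ (i,j) = (of_nat l1 \<cdot>\<^sub>m Q\<^sub>1) $$ (i,j)" unfolding YQ ..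
    then show ?thesis using that Y Q1 by simp
  qed
  have Ee: "of_int ((transpose_mat Y * X) $$ (u,v)) = of_nat l1 * of_nat l * Q2 $$ (u,v)" if uv: "u < n" "v < n" for u v
  proof -
    have "of_int ((transpose_mat Y * X) $$ (u,v)) = (of_int (\<Sum>r<n. Y $$ (r,u) * X $$ (r,v)) :: rat)"
      unfolding tmult_entry[OF Y X uv] ..
    also have "\<dots> = of_nat l1 * of_nat l * (\<Sum>r<n. Q\<^sub>1 $$ (r,u) * Q $$ (r,v))"
      by (simp add: sum_distrib_left Xe Ye uv ac_simps)
    also have "(\<Sum>r<n. Q\<^sub>1 $$ (r,u) * Q $$ (r,v)) = Q2 $$ (u,v)"
      unfolding Q2_def using mult_entry[of "transpose_mat Q\<^sub>1" n n Q n u v] Q Q1 uv by simp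
    finally show ?thesis .
  qed
  have Ediv: "(int l1)^2 dvd (transpose_mat Y * X) $$ (u,v)" if uv: "u < n" "v < n" for u v
  proof (rule sqf_sq_dvd[OF sq1])
    fix p :: nat assume p: "prime p" and pl1: "p dvd l1"
    have ip: "prime (int p)" using p by simp
    have pl: "int p dvd int l" using dvd_trans[OF pl1 l1l] by simp
    have pl1': "int p dvd int l1" using pl1 by simp
    have pm: "p dvd nat \<bar>m\<bar>" using dvd_trans[OF pl1 hl1] .
    then have pmi: "int p dvd m" by (metis dvd_abs_iff int_dvd_int_iff nat_0_le abs_ge_zero int_nat_eq)
    have p2: "int p \<noteq> 2"
    proof
      assume "int p = 2" then have "2 dvd m" using pmi by simp
      with modd show False by simp
    qed
    have np2: "\<not> (int p)^2 dvd m"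
    proof
      assume "(int p)^2 dvd m"
      from squarefreeD[OF msq this] have "int p dvd 1" .
      with ip not_prime_unit show False by blast
    qed
    define M where "M = transpose_mat IS"
    have M: "M \<in> carrier_mat n n" unfolding M_def using IS by simp
    have dM: "det M = m" unfolding M_def using det_transpose[OF IS(1)] dIS by simp
    show "(int p)^2 dvd (transpose_mat Y * X) $$ (u,v)"
    proof (rule core2[OF M X Y ip p2 _ _ _ _ _ _ _ _ uv])
      show "int p dvd det M" unfolding dM by (rule pmi)
      show "\<not> (int p)^2 dvd det M" unfolding dM by (rule np2)
      show "int p dvd (M * X) $$ (i,j)" if "i < n" "j < n" for i j
        using X_facts(3)[OF Q QtQ TD' IS(1) ID(1) ip pl[unfolded l_def] that] unfolding M_def X_def l_def .
      show "int p dvd (M * Y) $$ (i,j)" if "i < n" "j < n" for i j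
        using X_facts(3)[OF Q1 Q1tQ1 TG' IS(1) IG(1) ip pl1'[unfolded l1_def] that] unfolding M_def Y_def l1_def .
      show "(int p)^2 dvd (transpose_mat X * X) $$ (i,j)" if "i < n" "j < n" for i j
        using X_facts(4)[OF Q QtQ TD' IS(1) ID(1) ip pl[unfolded l_def] that] unfolding X_def l_def .
      show "(int p)^2 dvd (transpose_mat Y * Y) $$ (i,j)" if "i < n" "j < n" for i j
        using X_facts(4)[OF Q1 Q1tQ1 TG' IS(1) IG(1) ip pl1'[unfolded l1_def] that] unfolding Y_def l1_def .
      show "\<exists>i<n. \<exists>j<n. \<not> int p dvd X $$ (i,j)"
        using X_facts(5)[OF Q QtQ TD' IS(1) ID(1) ip pl[unfolded l_def]] unfolding X_def l_def .
      show "\<exists>i<n. \<exists>j<n. \<not> int p dvd Y $$ (i,j)"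
        using X_facts(5)[OF Q1 Q1tQ1 TG' IS(1) IG(1) ip pl1'[unfolded l1_def]] unfolding Y_def l1_def .
    qed
  qed
  have intq: "integral_mat (of_nat q \<cdot>\<^sub>m Q2)" unfolding integral_mat_smult_iff
  proof (intro allI impI)
    fix u v assume "u < dim_row Q2" "v < dim_col Q2"
    then have uv: "u < n" "v < n" using Q2 by auto
    obtain e where e: "(transpose_mat Y * X) $$ (u,v) = (int l1)^2 * e" using Ediv[OF uv] by blast
    have "(of_int ((int l1)^2 * e) :: rat) = of_nat l1 * of_nat l * Q2 $$ (u,v)" unfolding e[symmetric] by (rule Ee[OF uv])
    then have "of_nat l1 * of_nat l1 * (of_int e :: rat) = of_nat l1 * of_nat l1 * (of_nat q * Q2 $$ (u,v))"
      unfolding lq by (simp add: power2_eq_square ac_simps)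
    then have "of_nat q * Q2 $$ (u,v) = (of_int e :: rat)" using l1pos by simp
    then show "of_nat q * Q2 $$ (u,v) \<in> \<int>" by simp
  qed
  have d1: "level Q2 dvd q" by (rule level_dvd[OF qpos intq])
  have d2: "q dvd level Q2"
  proof -
    define k where "k = level Q2"
    have kpos: "k > 0" and ik: "integral_mat (of_nat k \<cdot>\<^sub>m Q2)" unfolding k_def by (auto intro: level_pos level_integral)
    have QQ2: "Q = Q\<^sub>1 * Q2" 
    proof -
      have "Q\<^sub>1 * Q2 = (Q\<^sub>1 * transpose_mat Q\<^sub>1) * Q" unfolding Q2_def using Q1 Q1t Q by (simp add: assoc_mult_mat[of _ n n _ n _ n])
      then show ?thesis unfolding Q1Q1t using Q by simp
    qed
    have "integral_mat (of_nat (k * l1) \<cdot>\<^sub>m Q)" unfolding integral_mat_smult_iff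
    proof (intro allI impI)
      fix i j assume "i < dim_row Q" "j < dim_col Q"
      then have ij: "i < n" "j < n" using Q by auto
      have a: "of_nat l1 * Q\<^sub>1 $$ (i,r) \<in> \<int>" if "r < n" for r
        using level_integral[of Q\<^sub>1] ij that Q1 unfolding l1_def integral_mat_def by auto
      have b: "of_nat k * Q2 $$ (r,j) \<in> \<int>" if "r < n" for r
        using ik ij that Q2 unfolding integral_mat_def by auto
      have "of_nat (k * l1) * Q $$ (i,j) = of_nat (k * l1) * (\<Sum>r<n. Q\<^sub>1 $$ (i,r) * Q2 $$ (r,j))"
        unfolding QQ2 using mult_entry[OF Q1 Q2 ij] by simp
      also have "\<dots> = (\<Sum>r<n. (of_nat l1 * Q\<^sub>1 $$ (i,r)) * (of_nat k * Q2 $$ (r,j)))"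
        by (simp add: sum_distrib_left ac_simps)
      also have "\<dots> \<in> \<int>" by (rule Ints_sum, rule Ints_mult) (use a b in auto)
      finally show "of_nat (k * l1) * Q $$ (i,j) \<in> \<int>" .
    qed
    from level_dvd[OF _ this] kpos l1pos have "l dvd k * l1" unfolding l_def by simp
    then have "l1 * q dvd l1 * k" unfolding lq by (simp add: ac_simps)
    then show ?thesis unfolding k_def using l1pos by simp
  qed
  have "level Q2 = q" using d1 d2 by (rule dvd_antisym)
  then show ?thesis using conj1 unfolding Q2_def S_def SD_def SG_def q_def l_def l1_def by simp
qed

end
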